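(* Assume Assumptions 1 and 2 hold. As $n,N\to\infty$ with $n/N\to a\in(0,+\infty)$, $$\frac1n\sum_{i\neq j}G_N(i,j)^2\ \longrightarrow\ a\quad\text{in probability},$$ where the sum runs over ordered pairs $i\neq j$ in $\{1,\dots,n\}$.
   Context: Let $A=(A_{i,k})_{1\le i\le n,\,1\le k\le N}$ be a random matrix with independent columns, such that for each $k$ the entries $A_{1,k},\dots,A_{n,k}$ are i.i.d.; write $m_k=\mathbb{E}[A_{1,k}]$ and $\sigma_k^2=\mathrm{Var}(A_{1,k})$. Put $\bar A_k=\frac1n\sum_{i=1}^n A_{i,k}$, $s_k^2=\frac1n\sum_{i=1}^n(A_{i,k}-\bar A_k)^2$ (assumed $>0$ a.s.), and $Z_{i,k}=(A_{i,k}-\bar A_k)/s_k$. Let $G_N(i,j)=\frac1N\sum_{k=1}^N Z_{i,k}Z_{j,k}$. Assumption 1: there exist $d>0$, $C>0$ and a neighborhood $V_0$ of $0$ such that for all $\lambda\in V_0$, all $i\neq j$ and all $k$: (1.1) $\mathbb{E}[\exp(\lambda((A_{i,k}-m_k)^2-\sigma_k^2))]\le C\exp(d\lambda^2)$; (1.2) $\mathbb{E}[\exp(\lambda(A_{i,k}-m_k))]\le C\exp(d\lambda^2)$; (1.3) $\mathbb{E}[\exp(\lambda(A_{i,k}-m_k)(A_{j,k}-m_k))]\le C\exp(d\lambda^2)$. Assumption 2: (2.1) $\inf_{k}\sigma_k^2=\delta_{min}>0$; (2.2) $\sup_k\sigma_k^2=\delta_{max}<+\infty$ (uniformly in $N$).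 *)

theory Defs
  imports "HOL-Probability.Probability"
begin

text \<open>A single random matrix is given as A :: nat => nat => 'a => real, with
  A i k the entry in row i (1..n) and column k (1..N).\<close>

definition col_mean :: "nat \<Rightarrow> (nat \<Rightarrow> nat \<Rightarrow> 'a \<Rightarrow> real) \<Rightarrow> nat \<Rightarrow> 'a \<Rightarrow> real" where
  "col_mean n A k \<omega> = (\<Sum>i=1..n. A i k \<omega>) / real n"

definition col_svar :: "nat \<Rightarrow> (nat \<Rightarrow> nat \<Rightarrow> 'a \<Rightarrow> real) \<Rightarrow> nat \<Rightarrow> 'a \<Rightarrow> real" where
  "col_svar n A k \<omega> = (\<Sum>i=1..n. (A i k \<omega> - col_mean n A k \<omega>)^2) / real n"

definition Zmat :: "nat \<Rightarrow> (nat \<Rightarrow> nat \<Rightarrow> 'a \<Rightarrow> real) \<Rightarrow> nat \<Rightarrow> nat \<Rightarrow> 'a \<Rightarrow> real" where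
  "Zmat n A i k \<omega> = (A i k \<omega> - col_mean n A k \<omega>) / sqrt (col_svar n A k \<omega>)"

definition Gmat :: "nat \<Rightarrow> nat \<Rightarrow> (nat \<Rightarrow> nat \<Rightarrow> 'a \<Rightarrow> real) \<Rightarrow> nat \<Rightarrow> nat \<Rightarrow> 'a \<Rightarrow> real" where
  "Gmat n N A i j \<omega> = (\<Sum>k=1..N. Zmat n A i k \<omega> * Zmat n A j k \<omega>) / real N"

definition col_mu :: "'a measure \<Rightarrow> (nat \<Rightarrow> nat \<Rightarrow> 'a \<Rightarrow> real) \<Rightarrow> nat \<Rightarrow> real" where
  "col_mu M A k = prob_space.expectation M (A 1 k)"

definition col_sig2 :: "'a measure \<Rightarrow> (nat \<Rightarrow> nat \<Rightarrow> 'a \<Rightarrow> real) \<Rightarrow> nat \<Rightarrow> real" where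
  "col_sig2 M A k = prob_space.variance M (A 1 k)"

end

theory Submission
  imports Defs
begin


lemma (in prob_space) indep_prod_integral:
  fixes g :: "'k \<Rightarrow> 'b \<Rightarrow> real"
  assumes ind: "indep_vars Mc V K" and fin: "finite S" and sub: "S \<subseteq> K"
    and g: "\<And>c. c \<in> S \<Longrightarrow> g c \<in> borel_measurable (Mc c)"
    and int: "\<And>c. c \<in> S \<Longrightarrow> integrable M (\<lambda>\<omega>. g c (V c \<omega>))"
  shows "(\<integral>\<omega>. (\<Prod>c\<in>S. g c (V c \<omega>)) \<partial>M) = (\<Prod>c\<in>S. \<integral>\<omega>. g c (V c \<omega>) \<partial>M)"
    "integrable M (\<lambda>\<omega>. \<Prod>c\<in>S. g c (V c \<omega>))"
proof -
  have "indep_vars (\<lambda>_. borel) (\<lambda>c \<omega>. g c (V c \<omega>)) S"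
    by (rule indep_vars_compose2[OF indep_vars_subset[OF ind sub]]) (use g in auto)
  then show "(\<integral>\<omega>. (\<Prod>c\<in>S. g c (V c \<omega>)) \<partial>M) = (\<Prod>c\<in>S. \<integral>\<omega>. g c (V c \<omega>) \<partial>M)"
    "integrable M (\<lambda>\<omega>. \<Prod>c\<in>S. g c (V c \<omega>))"
    using indep_vars_lebesgue_integral[OF fin _ int] indep_vars_integrable[OF fin _ int] by auto
qed

lemma (in prob_space) indep_rv:
  assumes "indep_vars Mc V K" "c \<in> K" shows "V c \<in> measurable M (Mc c)"
  using assms unfolding indep_vars_def by auto

lemma (in prob_space) indep_prod_zero:
  fixes Y :: "'k \<Rightarrow> 'p \<Rightarrow> 'b \<Rightarrow> real" and pos :: "'t \<Rightarrow> 'k"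
  assumes ind: "indep_vars Mc V K" and fin: "finite T" and posK: "pos ` T \<subseteq> K"
    and Ym: "\<And>c p. c \<in> K \<Longrightarrow> Y c p \<in> borel_measurable (Mc c)"
    and Yb: "\<And>c p x. c \<in> K \<Longrightarrow> x \<in> space (Mc c) \<Longrightarrow> \<bar>Y c p x\<bar> \<le> B"
    and tz: "tz \<in> T" and uniq: "\<And>t. t \<in> T \<Longrightarrow> pos t = pos tz \<Longrightarrow> t = tz"
    and z: "(\<integral>\<omega>. Y (pos tz) (crd tz) (V (pos tz) \<omega>) \<partial>M) = 0"
  shows "(\<integral>\<omega>. (\<Prod>t\<in>T. Y (pos t) (crd t) (V (pos t) \<omega>)) \<partial>M) = 0"
proof -
  define gc where "gc c x = (\<Prod>t\<in>{t\<in>T. pos t = c}. Y c (crd t) x)" for c x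
  have eq: "(\<Prod>t\<in>T. Y (pos t) (crd t) (V (pos t) \<omega>)) = (\<Prod>c\<in>pos ` T. gc c (V c \<omega>))" for \<omega>
    unfolding gc_def by (subst prod.image_gen[OF fin, where g=pos]) (auto intro!: prod.cong)
  have gm: "gc c \<in> borel_measurable (Mc c)" if "c \<in> pos ` T" for c
    unfolding gc_def using that posK Ym by (intro borel_measurable_prod) auto
  have gint: "integrable M (\<lambda>\<omega>. gc c (V c \<omega>))" if c: "c \<in> pos ` T" for c
  proof (rule integrable_const_bound[where B="B ^ card {t\<in>T. pos t = c}"])
    have Vc: "V c \<in> measurable M (Mc c)" using indep_rv[OF ind] c posK by auto
    show "AE x in M. norm (gc c (V c x)) \<le> B ^ card {t\<in>T. pos t = c}"
    proof (rule AE_I2)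
      fix x assume x: "x \<in> space M"
      have "V c x \<in> space (Mc c)" using Vc x by (auto simp: measurable_def)
      then show "norm (gc c (V c x)) \<le> B ^ card {t\<in>T. pos t = c}"
        unfolding gc_def real_norm_def abs_prod using c posK Yb
        by (subst prod_constant[symmetric]) (intro prod_mono, auto)
    qed
    show "(\<lambda>x. gc c (V c x)) \<in> borel_measurable M"
      using measurable_comp[OF Vc gm[OF c]] by (simp add: comp_def)
  qed
  have "(\<integral>\<omega>. (\<Prod>t\<in>T. Y (pos t) (crd t) (V (pos t) \<omega>)) \<partial>M) = (\<Prod>c\<in>pos ` T. \<integral>\<omega>. gc c (V c \<omega>) \<partial>M)"
    unfolding eq by (rule indep_prod_integral(1)[OF ind _ posK gm gint]) (use fin in auto)
  also have "\<dots> = 0"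
  proof (rule prod_zero)
    have "{t\<in>T. pos t = pos tz} = {tz}" using tz uniq by auto
    then have "(\<integral>\<omega>. gc (pos tz) (V (pos tz) \<omega>) \<partial>M) = 0" using z by (simp add: gc_def)
    then show "\<exists>c\<in>pos ` T. (\<integral>\<omega>. gc c (V c \<omega>) \<partial>M) = 0" using tz by auto
  qed (use fin in auto)
  finally show ?thesis .
qed



lemma (in prob_space) indep_pair:
  fixes X :: "'i \<Rightarrow> 'a \<Rightarrow> real"
  assumes ind: "indep_vars (\<lambda>_. borel) X I" and ij: "i \<in> I" "j \<in> I" "i \<noteq> j"
    and int: "integrable M (X i)" "integrable M (X j)"
  shows "(\<integral>\<omega>. X i \<omega> * X j \<omega> \<partial>M) = (\<integral>\<omega>. X i \<omega> \<partial>M) * (\<integral>\<omega>. X j \<omega> \<partial>M)"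
    "integrable M (\<lambda>\<omega>. X i \<omega> * X j \<omega>)"
proof -
  have 1: "(\<integral>\<omega>. (\<Prod>c\<in>{i,j}. (\<lambda>x. x) (X c \<omega>)) \<partial>M) = (\<Prod>c\<in>{i,j}. \<integral>\<omega>. (\<lambda>x. x) (X c \<omega>) \<partial>M)"
    by (rule indep_prod_integral(1)[OF ind], use ij int in auto)
  have 2: "integrable M (\<lambda>\<omega>. \<Prod>c\<in>{i,j}. (\<lambda>x. x) (X c \<omega>))"
    by (rule indep_prod_integral(2)[OF ind], use ij int in auto)
  have e: "(\<lambda>\<omega>. \<Prod>c\<in>{i,j}. (\<lambda>x. x) (X c \<omega>)) = (\<lambda>\<omega>. X i \<omega> * X j \<omega>)" using ij by auto
  show "(\<integral>\<omega>. X i \<omega> * X j \<omega> \<partial>M) = (\<integral>\<omega>. X i \<omega> \<partial>M) * (\<integral>\<omega>. X j \<omega> \<partial>M)"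
    using 1 ij unfolding e by simp
  show "integrable M (\<lambda>\<omega>. X i \<omega> * X j \<omega>)" using 2 unfolding e .
qed

lemma (in prob_space) indep_sum_sq:
  fixes X :: "'i \<Rightarrow> 'a \<Rightarrow> real"
  assumes ind: "indep_vars (\<lambda>_. borel) X I" and fin: "finite I"
    and sq: "\<And>i. i \<in> I \<Longrightarrow> integrable M (\<lambda>\<omega>. X i \<omega> ^ 2)"
    and z: "\<And>i. i \<in> I \<Longrightarrow> (\<integral>\<omega>. X i \<omega> \<partial>M) = 0"
  shows "(\<integral>\<omega>. (\<Sum>i\<in>I. X i \<omega>)^2 \<partial>M) = (\<Sum>i\<in>I. \<integral>\<omega>. X i \<omega> ^ 2 \<partial>M)"
proof -
  have rv: "X i \<in> borel_measurable M" if "i \<in> I" for i using indep_rv[OF ind that] by simp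
  have intX: "integrable M (X i)" if "i \<in> I" for i
    by (rule square_integrable_imp_integrable[OF rv[OF that] sq[OF that]])
  have pint: "integrable M (\<lambda>\<omega>. X i \<omega> * X j \<omega>)" if "i \<in> I" "j \<in> I" for i j
  proof (cases "i = j")
    case True then show ?thesis using sq[OF that(1)] by (simp add: power2_eq_square)
  next
    case False then show ?thesis using indep_pair(2)[OF ind that False intX intX] that by auto
  qed
  have "(\<integral>\<omega>. (\<Sum>i\<in>I. X i \<omega>)^2 \<partial>M) = (\<integral>\<omega>. (\<Sum>i\<in>I. \<Sum>j\<in>I. X i \<omega> * X j \<omega>) \<partial>M)"
    by (simp add: power2_eq_square sum_product)
  also have "\<dots> = (\<Sum>i\<in>I. \<Sum>j\<in>I. \<integral>\<omega>. X i \<omega> * X j \<omega> \<partial>M)"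
    using pint by (simp add: Bochner_Integration.integral_sum Bochner_Integration.integrable_sum)
  also have "\<dots> = (\<Sum>i\<in>I. \<integral>\<omega>. X i \<omega> ^ 2 \<partial>M)"
  proof (rule sum.cong[OF refl])
    fix i assume i: "i \<in> I"
    have "(\<Sum>j\<in>I. \<integral>\<omega>. X i \<omega> * X j \<omega> \<partial>M) = (\<Sum>j\<in>I. if j = i then \<integral>\<omega>. X i \<omega> ^ 2 \<partial>M else 0)"
    proof (rule sum.cong[OF refl])
      fix j assume j: "j \<in> I"
      show "(\<integral>\<omega>. X i \<omega> * X j \<omega> \<partial>M) = (if j = i then \<integral>\<omega>. X i \<omega> ^ 2 \<partial>M else 0)"
      proof (cases "j = i")
        case True then show ?thesis by (simp add: power2_eq_square)
      next
        case False then show ?thesis using indep_pair(1)[OF ind i j _ intX intX] i j z by auto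
      qed
    qed
    then show "(\<Sum>j\<in>I. \<integral>\<omega>. X i \<omega> * X j \<omega> \<partial>M) = (\<integral>\<omega>. X i \<omega> ^ 2 \<partial>M)"
      using fin i by simp
  qed
  finally show ?thesis .
qed

lemma (in prob_space) indep_sum_sq_int:
  fixes X :: "'i \<Rightarrow> 'a \<Rightarrow> real"
  assumes ind: "indep_vars (\<lambda>_. borel) X I" and fin: "finite I"
    and sq: "\<And>i. i \<in> I \<Longrightarrow> integrable M (\<lambda>\<omega>. X i \<omega> ^ 2)"
  shows "integrable M (\<lambda>\<omega>. (\<Sum>i\<in>I. X i \<omega>)^2)"
proof -
  have rv: "X i \<in> borel_measurable M" if "i \<in> I" for i using indep_rv[OF ind that] by simp
  have intX: "integrable M (X i)" if "i \<in> I" for i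
    by (rule square_integrable_imp_integrable[OF rv[OF that] sq[OF that]])
  have pint: "integrable M (\<lambda>\<omega>. X i \<omega> * X j \<omega>)" if "i \<in> I" "j \<in> I" for i j
  proof (cases "i = j")
    case True then show ?thesis using sq[OF that(1)] by (simp add: power2_eq_square)
  next
    case False then show ?thesis using indep_pair(2)[OF ind that False intX intX] that by auto
  qed
  have "(\<lambda>\<omega>. (\<Sum>i\<in>I. X i \<omega>)^2) = (\<lambda>\<omega>. \<Sum>i\<in>I. \<Sum>j\<in>I. X i \<omega> * X j \<omega>)"
    by (simp add: power2_eq_square sum_product)
  then show ?thesis using pint by simp
qed



definition cmean :: "nat \<Rightarrow> (nat \<Rightarrow> real) \<Rightarrow> real" where
  "cmean n x = (\<Sum>i=1..n. x i) / real n"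
definition cvar :: "nat \<Rightarrow> (nat \<Rightarrow> real) \<Rightarrow> real" where
  "cvar n x = (\<Sum>i=1..n. (x i - cmean n x)^2) / real n"
definition zf :: "nat \<Rightarrow> nat \<Rightarrow> (nat \<Rightarrow> real) \<Rightarrow> real" where
  "zf n i x = (x i - cmean n x) / sqrt (cvar n x)"

lemma Zmat_zf: "Zmat n A i k \<omega> = zf n i (\<lambda>i. A i k \<omega>)"
  and col_svar_cvar: "col_svar n A k \<omega> = cvar n (\<lambda>i. A i k \<omega>)"
  by (simp_all add: Zmat_def zf_def col_svar_def col_mean_def cvar_def cmean_def)

lemma cmean_cong: "(\<And>j. j \<in> {1..n} \<Longrightarrow> x j = y j) \<Longrightarrow> cmean n x = cmean n y"
  unfolding cmean_def by (metis sum.cong)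
lemma cvar_cong: "(\<And>j. j \<in> {1..n} \<Longrightarrow> x j = y j) \<Longrightarrow> cvar n x = cvar n y"
  unfolding cvar_def using cmean_cong[of n x y] by (metis (no_types, lifting) sum.cong)
lemma zf_cong: "(\<And>j. j \<in> {1..n} \<Longrightarrow> x j = y j) \<Longrightarrow> i \<in> {1..n} \<Longrightarrow> zf n i x = zf n i y"
  unfolding zf_def using cmean_cong[of n x y] cvar_cong[of n x y] by simp

lemma cvar_nonneg: "cvar n x \<ge> 0"
  unfolding cvar_def by (intro divide_nonneg_nonneg sum_nonneg) auto

lemma zf_sum0: "(\<Sum>i=1..n. zf n i x) = 0"
proof -
  have "(\<Sum>i=1..n. zf n i x) = (\<Sum>i=1..n. (x i - cmean n x)) / sqrt (cvar n x)"
    unfolding zf_def by (simp add: sum_divide_distrib)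
  also have "(\<Sum>i=1..n. (x i - cmean n x)) = 0"
    by (cases "n = 0") (simp_all add: sum_subtractf cmean_def)
  finally show ?thesis by simp
qed

lemma zf_sumsq: assumes "cvar n x > 0" shows "(\<Sum>i=1..n. zf n i x ^ 2) = real n"
proof -
  have n: "n > 0" using assms by (cases "n = 0") (auto simp: cvar_def)
  have "(\<Sum>i=1..n. zf n i x ^ 2) = (\<Sum>i=1..n. (x i - cmean n x)^2) / cvar n x"
    unfolding zf_def using cvar_nonneg[of n x] by (simp add: power_divide sum_divide_distrib)
  also have "\<dots> = real n" using assms n unfolding cvar_def by (simp add: field_simps)
  finally show ?thesis .
qed

lemma zf_sq_le: assumes "i \<in> {1..n}" shows "zf n i x ^ 2 \<le> real n"
proof (cases "cvar n x > 0")
  case True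
  have "zf n i x ^ 2 \<le> (\<Sum>i=1..n. zf n i x ^ 2)"
    using assms by (intro member_le_sum) auto
  then show ?thesis using zf_sumsq[OF True] by simp
next
  case False
  then have "cvar n x = 0" using cvar_nonneg[of n x] by simp
  then show ?thesis by (simp add: zf_def)
qed

lemma zf_abs_le: assumes "i \<in> {1..n}" shows "\<bar>zf n i x\<bar> \<le> sqrt (real n)"
  using zf_sq_le[OF assms, of x] real_sqrt_le_mono by fastforce

lemma sum_perm_I: assumes "\<sigma> permutes {1..n}" shows "(\<Sum>j=1..n. f (\<sigma> j)) = (\<Sum>j=1..n. (f j::real))"
  using sum.permute[OF assms, of f] by (simp add: comp_def)

lemma zf_perm: assumes "\<sigma> permutes {1..n}"
  shows "zf n i (\<lambda>j. x (\<sigma> j)) = zf n (\<sigma> i) x"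
proof -
  have m: "cmean n (\<lambda>j. x (\<sigma> j)) = cmean n x" unfolding cmean_def using sum_perm_I[OF assms, of x] by simp
  have v: "cvar n (\<lambda>j. x (\<sigma> j)) = cvar n x" unfolding cvar_def m
    using sum_perm_I[OF assms, of "\<lambda>j. (x j - cmean n x)^2"] by simp
  show ?thesis unfolding zf_def m v ..
qed

lemma zf_meas: "i \<in> {1..n} \<Longrightarrow> zf n i \<in> borel_measurable (PiM {1..n} (\<lambda>_. borel))"
  unfolding zf_def cvar_def cmean_def by measurable



locale colmodel = prob_space M for M :: "'a measure" +
  fixes n N :: nat and A :: "nat \<Rightarrow> nat \<Rightarrow> 'a \<Rightarrow> real"
  assumes meas: "\<And>i k. i \<in> {1..n} \<Longrightarrow> k \<in> {1..N} \<Longrightarrow> A i k \<in> borel_measurable M"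
  assumes col_indep: "indep_vars (\<lambda>k. PiM {1..n} (\<lambda>_. borel)) (\<lambda>k \<omega>. restrict (\<lambda>i. A i k \<omega>) {1..n}) {1..N}"
  assumes entry_indep: "\<And>k. k \<in> {1..N} \<Longrightarrow> indep_vars (\<lambda>_. borel) (\<lambda>i. A i k) {1..n}"
  assumes ident: "\<And>i k. i \<in> {1..n} \<Longrightarrow> k \<in> {1..N} \<Longrightarrow> distr M borel (A i k) = distr M borel (A 1 k)"
  assumes svar_pos: "\<And>k. k \<in> {1..N} \<Longrightarrow> AE \<omega> in M. col_svar n A k \<omega> > 0"
  assumes n2: "2 \<le> n"
begin

definition V :: "nat \<Rightarrow> 'a \<Rightarrow> nat \<Rightarrow> real" where "V k \<omega> = restrict (\<lambda>i. A i k \<omega>) {1..n}"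
definition u :: "nat \<Rightarrow> nat \<Rightarrow> 'a \<Rightarrow> real" where "u i k \<omega> = zf n i (V k \<omega>)"

lemma u_Zmat: "i \<in> {1..n} \<Longrightarrow> u i k \<omega> = Zmat n A i k \<omega>"
  unfolding u_def Zmat_zf V_def by (rule zf_cong) auto

lemma V_meas: "k \<in> {1..N} \<Longrightarrow> V k \<in> measurable M (PiM {1..n} (\<lambda>_. borel))"
  using indep_rv[OF col_indep] unfolding V_def by auto

lemma u_meas: "k \<in> {1..N} \<Longrightarrow> i \<in> {1..n} \<Longrightarrow> u i k \<in> borel_measurable M"
  unfolding u_def using measurable_comp[OF V_meas zf_meas] by (simp add: comp_def)

lemma u_bound: "i \<in> {1..n} \<Longrightarrow> \<bar>u i k \<omega>\<bar> \<le> sqrt (real n)"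
  unfolding u_def by (rule zf_abs_le)

lemma u_sum0: "(\<Sum>i=1..n. u i k \<omega>) = 0"
  unfolding u_def by (rule zf_sum0)

lemma AE_pos: "k \<in> {1..N} \<Longrightarrow> AE \<omega> in M. cvar n (V k \<omega>) > 0"
proof -
  assume k: "k \<in> {1..N}"
  have "cvar n (V k \<omega>) = col_svar n A k \<omega>" for \<omega>
    unfolding col_svar_cvar V_def by (rule cvar_cong) auto
  then show ?thesis using svar_pos[OF k] by simp
qed

lemma AE_sumsq: "k \<in> {1..N} \<Longrightarrow> AE \<omega> in M. (\<Sum>i=1..n. u i k \<omega> ^ 2) = real n"
proof -
  assume k: "k \<in> {1..N}"
  show ?thesis using AE_pos[OF k] by eventually_elim (auto simp: u_def dest: zf_sumsq)
qed

lemma distrV: assumes k: "k \<in> {1..N}"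
  shows "distr M (PiM {1..n} (\<lambda>_. borel)) (V k) = PiM {1..n} (\<lambda>_. distr M borel (A 1 k))"
proof -
  have ne: "{1..n} \<noteq> {}" using n2 by auto
  have rv: "random_variable borel (\<lambda>\<omega>. if i \<in> {1..n} then A i k \<omega> else 0)" for i
    using meas k by (cases "i \<in> {1..n}") auto
  have ind: "indep_vars (\<lambda>_. borel) (\<lambda>i \<omega>. if i \<in> {1..n} then A i k \<omega> else 0) {1..n}"
    using entry_indep[OF k] by (rule indep_vars_cong[THEN iffD1, rotated 3]) auto
  have "distr M (PiM {1..n} (\<lambda>_. borel)) (\<lambda>\<omega>. \<lambda>i\<in>{1..n}. if i \<in> {1..n} then A i k \<omega> else 0)
      = PiM {1..n} (\<lambda>i. distr M borel (\<lambda>\<omega>. if i \<in> {1..n} then A i k \<omega> else 0))"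
    using indep_vars_iff_distr_eq_PiM[OF ne rv] ind by simp
  moreover have "(\<lambda>\<omega>. \<lambda>i\<in>{1..n}. if i \<in> {1..n} then A i k \<omega> else 0) = V k"
    unfolding V_def by (auto simp: fun_eq_iff)
  moreover have "PiM {1..n} (\<lambda>i. distr M borel (\<lambda>\<omega>. if i \<in> {1..n} then A i k \<omega> else 0))
      = PiM {1..n} (\<lambda>_. distr M borel (A 1 k))"
  proof (rule PiM_cong)
    fix i assume i: "i \<in> {1..n}"
    then have "(\<lambda>\<omega>. if i \<in> {1..n} then A i k \<omega> else 0) = A i k" by auto
    then show "distr M borel (\<lambda>\<omega>. if i \<in> {1..n} then A i k \<omega> else 0) = distr M borel (A 1 k)"
      using ident[OF i k] by simp
  qed simp
  ultimately show ?thesis by simp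
qed

lemma exch:
  fixes h :: "(nat \<Rightarrow> real) \<Rightarrow> real"
  assumes k: "k \<in> {1..N}" and \<sigma>: "\<sigma> permutes {1..n}"
    and h: "h \<in> borel_measurable (PiM {1..n} (\<lambda>_. borel))"
  shows "(\<integral>\<omega>. h (V k \<omega>) \<partial>M) = (\<integral>\<omega>. h (\<lambda>j\<in>{1..n}. V k \<omega> (\<sigma> j)) \<partial>M)"
proof -
  let ?P = "PiM {1..n} (\<lambda>_. borel :: real measure)"
  let ?D = "PiM {1..n} (\<lambda>_. distr M borel (A 1 k))"
  let ?r = "\<lambda>x. \<lambda>j\<in>{1..n}. x (\<sigma> j)"
  have sD: "sets ?D = sets ?P" by (rule sets_PiM_cong) auto
  have rP: "?r \<in> measurable ?P ?P"
  proof (rule measurable_restrict)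
    fix j assume "j \<in> {1..n}"
    then have "\<sigma> j \<in> {1..n}" using \<sigma> by (meson permutes_in_image)
    then show "(\<lambda>x. x (\<sigma> j)) \<in> measurable ?P borel" by measurable
  qed
  have rD: "?r \<in> measurable ?D ?D" using rP measurable_cong_sets[OF sD sD] by simp
  have hD: "h \<in> borel_measurable ?D" using h measurable_cong_sets[OF sD refl] by simp
  have hr: "(\<lambda>x. h (?r x)) \<in> borel_measurable ?P" using measurable_comp[OF rP h] by (simp add: comp_def)
  have inj: "inj_on \<sigma> {1..n}" "\<sigma> \<in> {1..n} \<rightarrow> {1..n}"
    using \<sigma> permutes_inj_on permutes_in_image[OF \<sigma>] by auto
  have pd: "prob_space (distr M borel (A 1 k))"
    by (rule prob_space_distr) (use meas k n2 in auto)
  have re: "distr ?D ?D ?r = ?D"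
    using distr_PiM_reindex[of "{1..n}" "\<lambda>_. distr M borel (A 1 k)", OF pd inj] by simp
  have "(\<integral>\<omega>. h (V k \<omega>) \<partial>M) = integral\<^sup>L (distr M ?P (V k)) h"
    by (rule integral_distr[symmetric, OF V_meas[OF k] h])
  also have "\<dots> = integral\<^sup>L ?D h" unfolding distrV[OF k] ..
  also have "\<dots> = integral\<^sup>L (distr ?D ?D ?r) h" unfolding re ..
  also have "\<dots> = (\<integral>x. h (?r x) \<partial>?D)" by (rule integral_distr[OF rD hD])
  also have "\<dots> = (\<integral>x. h (?r x) \<partial>distr M ?P (V k))" unfolding distrV[OF k] ..
  also have "\<dots> = (\<integral>\<omega>. h (?r (V k \<omega>)) \<partial>M)" by (rule integral_distr[OF V_meas[OF k] hr])
  finally show ?thesis .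
qed

end


lemma (in finite_measure) integrable_bnd:
  fixes f :: "'a \<Rightarrow> real"
  assumes "f \<in> borel_measurable M" "\<And>\<omega>. \<omega> \<in> space M \<Longrightarrow> \<bar>f \<omega>\<bar> \<le> B"
  shows "integrable M f"
  by (rule integrable_const_bound[where B=B]) (use assms in auto)

context colmodel begin

lemma uu_int: "k \<in> {1..N} \<Longrightarrow> a \<in> {1..n} \<Longrightarrow> b \<in> {1..n} \<Longrightarrow> integrable M (\<lambda>\<omega>. u a k \<omega> * u b k \<omega>)"
proof (rule integrable_bnd[where B = "real n"])
  assume k: "k \<in> {1..N}" and ab: "a \<in> {1..n}" "b \<in> {1..n}"
  show "(\<lambda>\<omega>. u a k \<omega> * u b k \<omega>) \<in> borel_measurable M" using u_meas k ab by auto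
  fix \<omega>
  have "\<bar>u a k \<omega> * u b k \<omega>\<bar> \<le> sqrt (real n) * sqrt (real n)"
    unfolding abs_mult by (intro mult_mono u_bound ab) auto
  then show "\<bar>u a k \<omega> * u b k \<omega>\<bar> \<le> real n" by simp
qed

lemma u_exch:
  assumes k: "k \<in> {1..N}" and \<sigma>: "\<sigma> permutes {1..n}" and ab: "a \<in> {1..n}" "b \<in> {1..n}"
  shows "(\<integral>\<omega>. u a k \<omega> * u b k \<omega> \<partial>M) = (\<integral>\<omega>. u (\<sigma> a) k \<omega> * u (\<sigma> b) k \<omega> \<partial>M)"
proof -
  have h: "(\<lambda>x. zf n a x * zf n b x) \<in> borel_measurable (PiM {1..n} (\<lambda>_. borel))"
    using zf_meas ab by auto
  have e: "zf n c (\<lambda>j\<in>{1..n}. x (\<sigma> j)) = zf n (\<sigma> c) x" if "c \<in> {1..n}" for c x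
  proof -
    have "zf n c (\<lambda>j\<in>{1..n}. x (\<sigma> j)) = zf n c (\<lambda>j. x (\<sigma> j))" by (rule zf_cong) (use that in auto)
    also have "\<dots> = zf n (\<sigma> c) x" by (rule zf_perm[OF \<sigma>])
    finally show ?thesis .
  qed
  show ?thesis unfolding u_def using exch[OF k \<sigma> h] e ab by simp
qed

lemma u_exch2:
  assumes k: "k \<in> {1..N}" and i: "i \<in> {1..n}"
  shows "(\<integral>\<omega>. u i k \<omega> ^ 2 \<partial>M) = (\<integral>\<omega>. u 1 k \<omega> ^ 2 \<partial>M)"
proof -
  have 1: "1 \<in> {1..n}" using n2 by auto
  have "(\<integral>\<omega>. u 1 k \<omega> * u 1 k \<omega> \<partial>M) = (\<integral>\<omega>. u (Transposition.transpose 1 i 1) k \<omega> * u (Transposition.transpose 1 i 1) k \<omega> \<partial>M)"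
    by (rule u_exch[OF k permutes_swap_id[OF 1 i] 1 1])
  then show ?thesis by (simp add: power2_eq_square)
qed

lemma u_exch11:
  assumes k: "k \<in> {1..N}" and ij: "i \<in> {1..n}" "j \<in> {1..n}" "i \<noteq> j"
  shows "(\<integral>\<omega>. u i k \<omega> * u j k \<omega> \<partial>M) = (\<integral>\<omega>. u 1 k \<omega> * u 2 k \<omega> \<partial>M)"
proof -
  have 1: "1 \<in> {1..n}" "2 \<in> {1..n}" using n2 by auto
  define j' where "j' = Transposition.transpose 1 i j"
  have j': "j' \<in> {1..n}" unfolding j'_def using ij 1 permutes_in_image[OF permutes_swap_id[OF 1(1) ij(1)]] by blast
  define \<sigma> where "\<sigma> = Transposition.transpose 1 i \<circ> Transposition.transpose 2 j'"
  have \<sigma>: "\<sigma> permutes {1..n}" unfolding \<sigma>_def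
    by (intro permutes_compose permutes_swap_id 1 j' ij)
  have "j' \<noteq> 1" unfolding j'_def using ij by (auto simp: Transposition.transpose_def split: if_splits)
  then have s1: "\<sigma> 1 = i" unfolding \<sigma>_def by (simp add: transpose_def)
  have s2: "\<sigma> 2 = j" unfolding \<sigma>_def j'_def by (simp add: transpose_def)
  show ?thesis using u_exch[OF k \<sigma> 1] s1 s2 by simp
qed

lemma mom2: assumes k: "k \<in> {1..N}" and i: "i \<in> {1..n}"
  shows "(\<integral>\<omega>. u i k \<omega> ^ 2 \<partial>M) = 1"
proof -
  have int: "integrable M (\<lambda>\<omega>. u j k \<omega> ^ 2)" if "j \<in> {1..n}" for j
    using uu_int[OF k that that] by (simp add: power2_eq_square)
  have "real n = (\<integral>\<omega>. (\<Sum>j=1..n. u j k \<omega> ^ 2) \<partial>M)"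
    using integral_cong_AE[OF _ _ AE_sumsq[OF k]] u_meas[OF k] by (simp add: prob_space)
  also have "\<dots> = (\<Sum>j=1..n. \<integral>\<omega>. u j k \<omega> ^ 2 \<partial>M)"
    by (rule Bochner_Integration.integral_sum) (use int in auto)
  also have "\<dots> = (\<Sum>j=1..n. \<integral>\<omega>. u 1 k \<omega> ^ 2 \<partial>M)"
    by (rule sum.cong[OF refl]) (rule u_exch2[OF k])
  also have "\<dots> = real n * (\<integral>\<omega>. u 1 k \<omega> ^ 2 \<partial>M)" by simp
  finally have "(\<integral>\<omega>. u 1 k \<omega> ^ 2 \<partial>M) = 1" using n2 by simp
  then show ?thesis using u_exch2[OF k i] by simp
qed

lemma mom11: assumes k: "k \<in> {1..N}" and ij: "i \<in> {1..n}" "j \<in> {1..n}" "i \<noteq> j"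
  shows "(\<integral>\<omega>. u i k \<omega> * u j k \<omega> \<partial>M) = - 1 / (real n - 1)"
proof -
  define \<beta> where "\<beta> = (\<integral>\<omega>. u 1 k \<omega> * u 2 k \<omega> \<partial>M)"
  have "(\<Sum>a=1..n. \<Sum>b=1..n. u a k \<omega> * u b k \<omega>) = (\<Sum>a=1..n. u a k \<omega>) * (\<Sum>b=1..n. u b k \<omega>)" for \<omega>
    by (simp add: sum_product)
  then have "0 = (\<integral>\<omega>. (\<Sum>a=1..n. \<Sum>b=1..n. u a k \<omega> * u b k \<omega>) \<partial>M)"
    using u_sum0[of k] by simp
  also have "\<dots> = (\<Sum>a=1..n. \<Sum>b=1..n. \<integral>\<omega>. u a k \<omega> * u b k \<omega> \<partial>M)"
    apply (subst Bochner_Integration.integral_sum)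
     apply (rule Bochner_Integration.integrable_sum, use uu_int[OF k] in simp)
    apply (rule sum.cong[OF refl], rule Bochner_Integration.integral_sum)
    using uu_int[OF k] by simp
  also have "\<dots> = (\<Sum>a=1..n. 1 + (real n - 1) * \<beta>)"
  proof (rule sum.cong[OF refl])
    fix a assume a: "a \<in> {1..n}"
    have "(\<Sum>b=1..n. \<integral>\<omega>. u a k \<omega> * u b k \<omega> \<partial>M)
        = (\<integral>\<omega>. u a k \<omega> * u a k \<omega> \<partial>M) + (\<Sum>b\<in>{1..n}-{a}. \<integral>\<omega>. u a k \<omega> * u b k \<omega> \<partial>M)"
      using a by (simp add: sum.remove)
    also have "(\<integral>\<omega>. u a k \<omega> * u a k \<omega> \<partial>M) = 1" using mom2[OF k a] by (simp add: power2_eq_square)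
    also have "(\<Sum>b\<in>{1..n}-{a}. \<integral>\<omega>. u a k \<omega> * u b k \<omega> \<partial>M) = (\<Sum>b\<in>{1..n}-{a}. \<beta>)"
      unfolding \<beta>_def by (rule sum.cong[OF refl]) (use u_exch11[OF k a] in auto)
    also have "\<dots> = (real n - 1) * \<beta>" using a n2 by (simp add: of_nat_diff)
    finally show "(\<Sum>b=1..n. \<integral>\<omega>. u a k \<omega> * u b k \<omega> \<partial>M) = 1 + (real n - 1) * \<beta>" .
  qed
  also have "\<dots> = real n * (1 + (real n - 1) * \<beta>)" by simp
  finally have "real n * (1 + (real n - 1) * \<beta>) = 0" by simp
  then have "1 + (real n - 1) * \<beta> = 0" using n2 by simp
  moreover have "real n - 1 > 0" using n2 by simp
  ultimately have "\<beta> = - 1 / (real n - 1)" by (simp add: field_simps)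
  then show ?thesis using u_exch11[OF k ij] \<beta>_def by simp
qed

end


definition Pp :: "nat \<Rightarrow> (nat \<times> nat) set" where
  "Pp n = Sigma {1..n} (\<lambda>i. {1..n} - {i})"

lemma fin_Pp[simp]: "finite (Pp n)" unfolding Pp_def by auto

lemma sum_Pp: "(\<Sum>p\<in>Pp n. F (fst p) (snd p)) = (\<Sum>i=1..n. \<Sum>j\<in>{1..n}-{i}. (F i j :: real))"
  unfolding Pp_def by (subst sum.Sigma) (auto simp: split_beta)

lemma sum_Pp2: "(\<Sum>p\<in>Pp n. F (fst p) (snd p)) = (\<Sum>i=1..n. \<Sum>j=1..n. (F i j :: real)) - (\<Sum>i=1..n. F i i)"
proof -
  have "(\<Sum>j=1..n. F i j) = F i i + (\<Sum>j\<in>{1..n}-{i}. F i j)" if "i \<in> {1..n}" for i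
    using that by (simp add: sum.remove)
  then show ?thesis unfolding sum_Pp by (simp add: sum.distrib)
qed

lemma card_Pp: "card (Pp n) = n * (n - 1)"
proof -
  have "card (Pp n) = (\<Sum>i=1..n. card ({1..n} - {i}))" unfolding Pp_def by (subst card_SigmaI) auto
  also have "\<dots> = (\<Sum>i=1..n. n - 1)" by (rule sum.cong) auto
  finally show ?thesis by simp
qed

lemma mem_Pp: "p \<in> Pp n \<longleftrightarrow> fst p \<in> {1..n} \<and> snd p \<in> {1..n} \<and> fst p \<noteq> snd p"
  unfolding Pp_def by (cases p) auto

context colmodel begin

definition "rho = - 1 / (real n - 1)"
definition "qq = real n / (real n - 1)"

lemma n1: "real n - 1 > 0" using n2 by simp
lemma rho_n: "rho * real n = - qq" unfolding rho_def qq_def by (simp add: field_simps)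
lemma qq_le: "qq \<le> 2" "qq \<ge> 0"
  using n2 n1 unfolding qq_def by (simp_all add: field_simps)
lemma card_rho2: "real (n * (n - 1)) * rho^2 = qq"
proof -
  have e: "real (n * (n - 1)) = real n * (real n - 1)" using n2 by (simp add: of_nat_diff)
  have g: "x * t * (- 1 / t)^2 = x / t" if "t > 0" for x t :: real
    using that by (simp add: power2_eq_square field_simps)
  show ?thesis unfolding e rho_def qq_def using g[OF n1] by simp
qed

definition yf :: "nat \<times> nat \<Rightarrow> (nat \<Rightarrow> real) \<Rightarrow> real" where
  "yf p x = (if p \<in> Pp n then zf n (fst p) x * zf n (snd p) x - rho else 0)"

definition xi :: "nat \<Rightarrow> nat \<times> nat \<Rightarrow> 'a \<Rightarrow> real" where
  "xi k p \<omega> = yf p (V k \<omega>)"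

definition W :: "nat \<Rightarrow> nat \<Rightarrow> 'a \<Rightarrow> real" where
  "W k l \<omega> = (\<Sum>p\<in>Pp n. xi k p \<omega> * xi l p \<omega>)"

definition Qs :: "(nat \<times> nat) set" where "Qs = {q \<in> {1..N} \<times> {1..N}. fst q \<noteq> snd q}"

definition Uf :: "'a \<Rightarrow> real" where "Uf \<omega> = (\<Sum>q\<in>Qs. W (fst q) (snd q) \<omega>)"

lemma xi_u: "p \<in> Pp n \<Longrightarrow> xi k p \<omega> = u (fst p) k \<omega> * u (snd p) k \<omega> - rho"
  unfolding xi_def yf_def u_def by simp

lemma W_sym: "W k l \<omega> = W l k \<omega>" unfolding W_def by (simp add: mult.commute)

lemma sum_offdiag:
  assumes "(\<Sum>i=1..n. u i k \<omega> ^ 2) = real n"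
  shows "(\<Sum>p\<in>Pp n. u (fst p) k \<omega> * u (snd p) k \<omega>) = - real n"
proof -
  have "(\<Sum>i=1..n. \<Sum>j=1..n. u i k \<omega> * u j k \<omega>) = (\<Sum>i=1..n. u i k \<omega>) * (\<Sum>j=1..n. u j k \<omega>)"
    by (simp add: sum_product)
  then show ?thesis using u_sum0[of k \<omega>] assms unfolding sum_Pp2[of "\<lambda>i j. u i k \<omega> * u j k \<omega>"] by (simp add: power2_eq_square)
qed

definition cf :: "nat \<Rightarrow> nat \<Rightarrow> 'a \<Rightarrow> real" where
  "cf k l \<omega> = (\<Sum>i=1..n. u i k \<omega> * u i l \<omega>)"
definition Df :: "nat \<Rightarrow> nat \<Rightarrow> 'a \<Rightarrow> real" where
  "Df k l \<omega> = (\<Sum>i=1..n. u i k \<omega> ^ 2 * u i l \<omega> ^ 2)"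

lemma X_eq: "(\<Sum>p\<in>Pp n. u (fst p) k \<omega> * u (snd p) k \<omega> * (u (fst p) l \<omega> * u (snd p) l \<omega>))
   = cf k l \<omega> ^ 2 - Df k l \<omega>"
proof -
  have "cf k l \<omega> ^ 2 = (\<Sum>i=1..n. \<Sum>j=1..n. u i k \<omega> * u j k \<omega> * (u i l \<omega> * u j l \<omega>))"
    unfolding cf_def power2_eq_square sum_product by (intro sum.cong refl) (simp add: algebra_simps)
  then show ?thesis unfolding sum_Pp2[of "\<lambda>i j. u i k \<omega> * u j k \<omega> * (u i l \<omega> * u j l \<omega>)"] Df_def by (simp add: power2_eq_square algebra_simps)
qed

lemma W_eq:
  assumes "(\<Sum>i=1..n. u i k \<omega> ^ 2) = real n" "(\<Sum>i=1..n. u i l \<omega> ^ 2) = real n"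
  shows "W k l \<omega> = cf k l \<omega> ^ 2 - Df k l \<omega> - qq"
proof -
  have "W k l \<omega> = (\<Sum>p\<in>Pp n. u (fst p) k \<omega> * u (snd p) k \<omega> * (u (fst p) l \<omega> * u (snd p) l \<omega>))
     - rho * (\<Sum>p\<in>Pp n. u (fst p) k \<omega> * u (snd p) k \<omega>) - rho * (\<Sum>p\<in>Pp n. u (fst p) l \<omega> * u (snd p) l \<omega>)
     + real (card (Pp n)) * rho^2"
    unfolding W_def
    by (simp add: xi_u algebra_simps power2_eq_square sum.distrib sum_subtractf sum_distrib_left cong: sum.cong)
  also have "\<dots> = cf k l \<omega> ^ 2 - Df k l \<omega> - qq"
    unfolding X_eq sum_offdiag[OF assms(1)] sum_offdiag[OF assms(2)] card_Pp card_rho2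
    using rho_n by (simp add: algebra_simps)
  finally show ?thesis .
qed

end


context colmodel begin

lemma col_indepV: "indep_vars (\<lambda>k. PiM {1..n} (\<lambda>_. borel)) V {1..N}"
  using col_indep unfolding V_def[abs_def] .

lemma yf_meas: "yf p \<in> borel_measurable (PiM {1..n} (\<lambda>_. borel))"
proof (cases "p \<in> Pp n")
  case True
  then have "fst p \<in> {1..n}" "snd p \<in> {1..n}" by (auto simp: mem_Pp)
  then show ?thesis unfolding yf_def using True zf_meas by simp
next
  case False
  then have "yf p = (\<lambda>x. 0)" unfolding yf_def[abs_def] by auto
  then show ?thesis by simp
qed

lemma rho_abs: "\<bar>rho\<bar> \<le> 1" using n2 unfolding rho_def by (simp add: field_simps)

lemma zz_bound: "i \<in> {1..n} \<Longrightarrow> j \<in> {1..n} \<Longrightarrow> \<bar>zf n i x * zf n j x\<bar> \<le> real n"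
proof -
  assume ij: "i \<in> {1..n}" "j \<in> {1..n}"
  have "\<bar>zf n i x * zf n j x\<bar> \<le> sqrt (real n) * sqrt (real n)"
    unfolding abs_mult by (intro mult_mono zf_abs_le ij) auto
  then show ?thesis by simp
qed

lemma yf_bound: "\<bar>yf p x\<bar> \<le> real n + 1"
proof (cases "p \<in> Pp n")
  case True
  then have "fst p \<in> {1..n}" "snd p \<in> {1..n}" by (auto simp: mem_Pp)
  then have "\<bar>zf n (fst p) x * zf n (snd p) x\<bar> \<le> real n" by (rule zz_bound)
  then show ?thesis unfolding yf_def using True rho_abs by auto
qed (simp add: yf_def)

lemma xi_meas: "k \<in> {1..N} \<Longrightarrow> xi k p \<in> borel_measurable M"
  unfolding xi_def using measurable_comp[OF V_meas yf_meas] by (simp add: comp_def)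

lemma Exi0: assumes k: "k \<in> {1..N}" and p: "p \<in> Pp n"
  shows "(\<integral>\<omega>. xi k p \<omega> \<partial>M) = 0"
proof -
  have ij: "fst p \<in> {1..n}" "snd p \<in> {1..n}" "fst p \<noteq> snd p" using p by (auto simp: mem_Pp)
  have "(\<integral>\<omega>. xi k p \<omega> \<partial>M) = (\<integral>\<omega>. u (fst p) k \<omega> * u (snd p) k \<omega> \<partial>M) - (\<integral>\<omega>. rho \<partial>M)"
    unfolding xi_u[OF p] by (rule Bochner_Integration.integral_diff) (use uu_int[OF k ij(1,2)] in auto)
  also have "\<dots> = 0" using mom11[OF k ij] by (simp add: rho_def prob_space)
  finally show ?thesis .
qed

lemma two_col:
  fixes f g :: "(nat \<Rightarrow> real) \<Rightarrow> real"
  assumes kl: "k \<in> {1..N}" "l \<in> {1..N}" "k \<noteq> l"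
    and f: "f \<in> borel_measurable (PiM {1..n} (\<lambda>_. borel))" "\<And>x. \<bar>f x\<bar> \<le> Bf"
    and g: "g \<in> borel_measurable (PiM {1..n} (\<lambda>_. borel))" "\<And>x. \<bar>g x\<bar> \<le> Bg"
  shows "(\<integral>\<omega>. f (V k \<omega>) * g (V l \<omega>) \<partial>M) = (\<integral>\<omega>. f (V k \<omega>) \<partial>M) * (\<integral>\<omega>. g (V l \<omega>) \<partial>M)"
proof -
  define h where "h c = (if c = k then f else g)" for c
  have hm: "h c \<in> borel_measurable (PiM {1..n} (\<lambda>_. borel))" if "c \<in> {k,l}" for c
    using f g by (simp add: h_def)
  have hi: "integrable M (\<lambda>\<omega>. h c (V c \<omega>))" if c: "c \<in> {k,l}" for c
  proof (rule integrable_bnd[where B="max Bf Bg"])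
    have cK: "c \<in> {1..N}" using c kl by auto
    show "(\<lambda>\<omega>. h c (V c \<omega>)) \<in> borel_measurable M"
      using measurable_comp[OF V_meas[OF cK] hm[OF c]] by (simp add: comp_def)
    show "\<bar>h c (V c \<omega>)\<bar> \<le> max Bf Bg" for \<omega>
      using f(2) g(2) by (simp add: h_def le_max_iff_disj)
  qed
  have "(\<integral>\<omega>. (\<Prod>c\<in>{k,l}. h c (V c \<omega>)) \<partial>M) = (\<Prod>c\<in>{k,l}. \<integral>\<omega>. h c (V c \<omega>) \<partial>M)"
    by (rule indep_prod_integral(1)[OF col_indepV, of "{k,l}" h]) (use kl hm hi in auto)
  then show ?thesis using kl(3) by (simp add: h_def)
qed

lemma Ecf2: assumes kl: "k \<in> {1..N}" "l \<in> {1..N}" "k \<noteq> l"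
  shows "(\<integral>\<omega>. cf k l \<omega> ^ 2 \<partial>M) = real n + qq"
proof -
  have int: "integrable M (\<lambda>\<omega>. u i k \<omega> * u j k \<omega> * (u i l \<omega> * u j l \<omega>))"
    if "i \<in> {1..n}" "j \<in> {1..n}" for i j
  proof (rule integrable_bnd[where B="real n * real n"])
    show "(\<lambda>\<omega>. u i k \<omega> * u j k \<omega> * (u i l \<omega> * u j l \<omega>)) \<in> borel_measurable M"
      using u_meas kl that by auto
    show "\<bar>u i k \<omega> * u j k \<omega> * (u i l \<omega> * u j l \<omega>)\<bar> \<le> real n * real n" for \<omega>
    proof -
      have a: "\<bar>u i k \<omega> * u j k \<omega>\<bar> \<le> real n" "\<bar>u i l \<omega> * u j l \<omega>\<bar> \<le> real n"
        unfolding u_def using zz_bound that by auto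
      show ?thesis unfolding abs_mult[of "u i k \<omega> * u j k \<omega>"] by (rule mult_mono[OF a]) auto
    qed
  qed
  have E: "(\<integral>\<omega>. u i k \<omega> * u j k \<omega> * (u i l \<omega> * u j l \<omega>) \<partial>M)
        = (\<integral>\<omega>. u i k \<omega> * u j k \<omega> \<partial>M) * (\<integral>\<omega>. u i l \<omega> * u j l \<omega> \<partial>M)"
    if "i \<in> {1..n}" "j \<in> {1..n}" for i j
    unfolding u_def
    by (rule two_col[OF kl, where f="\<lambda>x. zf n i x * zf n j x" and g="\<lambda>x. zf n i x * zf n j x" and Bf="real n" and Bg="real n"])
       (use zf_meas that zz_bound in auto)
  have "cf k l \<omega> ^ 2 = (\<Sum>i=1..n. \<Sum>j=1..n. u i k \<omega> * u j k \<omega> * (u i l \<omega> * u j l \<omega>))" for \<omega>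
    unfolding cf_def power2_eq_square sum_product by (intro sum.cong refl) (simp add: algebra_simps)
  then have "(\<integral>\<omega>. cf k l \<omega> ^ 2 \<partial>M) = (\<Sum>i=1..n. \<Sum>j=1..n. \<integral>\<omega>. u i k \<omega> * u j k \<omega> * (u i l \<omega> * u j l \<omega>) \<partial>M)"
    apply simp
    apply (subst Bochner_Integration.integral_sum)
     apply (rule Bochner_Integration.integrable_sum, use int in simp)
    apply (rule sum.cong[OF refl], rule Bochner_Integration.integral_sum)
    using int by simp
  also have "\<dots> = (\<Sum>i=1..n. \<Sum>j=1..n. (\<integral>\<omega>. u i k \<omega> * u j k \<omega> \<partial>M) * (\<integral>\<omega>. u i l \<omega> * u j l \<omega> \<partial>M))"
    by (intro sum.cong refl E) auto
  also have "\<dots> = (\<Sum>p\<in>Pp n. (\<integral>\<omega>. u (fst p) k \<omega> * u (snd p) k \<omega> \<partial>M) * (\<integral>\<omega>. u (fst p) l \<omega> * u (snd p) l \<omega> \<partial>M))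
      + (\<Sum>i=1..n. (\<integral>\<omega>. u i k \<omega> * u i k \<omega> \<partial>M) * (\<integral>\<omega>. u i l \<omega> * u i l \<omega> \<partial>M))"
    unfolding sum_Pp2[of "\<lambda>i j. (\<integral>\<omega>. u i k \<omega> * u j k \<omega> \<partial>M) * (\<integral>\<omega>. u i l \<omega> * u j l \<omega> \<partial>M)"] by simp
  also have "(\<Sum>p\<in>Pp n. (\<integral>\<omega>. u (fst p) k \<omega> * u (snd p) k \<omega> \<partial>M) * (\<integral>\<omega>. u (fst p) l \<omega> * u (snd p) l \<omega> \<partial>M))
      = (\<Sum>p\<in>Pp n. rho^2)"
  proof (rule sum.cong[OF refl])
    fix p assume p: "p \<in> Pp n"
    then have ij: "fst p \<in> {1..n}" "snd p \<in> {1..n}" "fst p \<noteq> snd p" by (auto simp: mem_Pp)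
    show "(\<integral>\<omega>. u (fst p) k \<omega> * u (snd p) k \<omega> \<partial>M) * (\<integral>\<omega>. u (fst p) l \<omega> * u (snd p) l \<omega> \<partial>M) = rho^2"
      unfolding mom11[OF kl(1) ij] mom11[OF kl(2) ij] rho_def by (simp add: power2_eq_square)
  qed
  also have "(\<Sum>i=1..n. (\<integral>\<omega>. u i k \<omega> * u i k \<omega> \<partial>M) * (\<integral>\<omega>. u i l \<omega> * u i l \<omega> \<partial>M)) = (\<Sum>i=1..n. 1)"
    by (rule sum.cong[OF refl]) (use mom2 kl in \<open>auto simp: power2_eq_square\<close>)
  finally show ?thesis using card_rho2 card_Pp by simp
qed

lemma EDf: assumes kl: "k \<in> {1..N}" "l \<in> {1..N}" "k \<noteq> l"
  shows "(\<integral>\<omega>. Df k l \<omega> \<partial>M) = real n"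
proof -
  have int: "integrable M (\<lambda>\<omega>. u i k \<omega> ^ 2 * u i l \<omega> ^ 2)" if "i \<in> {1..n}" for i
  proof (rule integrable_bnd[where B="real n * real n"])
    show "(\<lambda>\<omega>. u i k \<omega> ^ 2 * u i l \<omega> ^ 2) \<in> borel_measurable M"
      using u_meas kl that by auto
    show "\<bar>u i k \<omega> ^ 2 * u i l \<omega> ^ 2\<bar> \<le> real n * real n" for \<omega>
    proof -
      have a: "u i k \<omega> ^ 2 \<le> real n" "u i l \<omega> ^ 2 \<le> real n"
        unfolding u_def using zf_sq_le that by auto
      have "u i k \<omega> ^ 2 * u i l \<omega> ^ 2 \<le> real n * real n" by (rule mult_mono[OF a]) auto
      then show ?thesis by simp
    qed
  qed
  have "(\<integral>\<omega>. Df k l \<omega> \<partial>M) = (\<Sum>i=1..n. \<integral>\<omega>. u i k \<omega> ^ 2 * u i l \<omega> ^ 2 \<partial>M)"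
    unfolding Df_def by (rule Bochner_Integration.integral_sum) (use int in auto)
  also have "\<dots> = (\<Sum>i=1..n. 1)"
  proof (rule sum.cong[OF refl])
    fix i assume i: "i \<in> {1..n}"
    have "(\<integral>\<omega>. u i k \<omega> ^ 2 * u i l \<omega> ^ 2 \<partial>M) = (\<integral>\<omega>. u i k \<omega> ^ 2 \<partial>M) * (\<integral>\<omega>. u i l \<omega> ^ 2 \<partial>M)"
      unfolding u_def
      by (rule two_col[OF kl, where f="\<lambda>x. zf n i x ^ 2" and g="\<lambda>x. zf n i x ^ 2" and Bf="real n" and Bg="real n"])
         (use zf_meas i zf_sq_le in auto)
    then show "(\<integral>\<omega>. u i k \<omega> ^ 2 * u i l \<omega> ^ 2 \<partial>M) = 1" using mom2 kl i by simp
  qed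
  finally show ?thesis by simp
qed

end


lemma abs_sum_le: "(\<And>i. i \<in> A \<Longrightarrow> \<bar>f i\<bar> \<le> (K::real)) \<Longrightarrow> \<bar>sum f A\<bar> \<le> real (card A) * K"
  by (rule order.trans[OF sum_abs sum_bounded_above]) auto

lemma sum_mult_le_prod:
  fixes a b :: "nat \<Rightarrow> real"
  assumes "finite S" "\<And>i. i \<in> S \<Longrightarrow> a i \<ge> 0" "\<And>i. i \<in> S \<Longrightarrow> b i \<ge> 0"
  shows "(\<Sum>i\<in>S. a i * b i) \<le> (\<Sum>i\<in>S. a i) * (\<Sum>i\<in>S. b i)"
proof -
  have "(\<Sum>i\<in>S. a i * b i) \<le> (\<Sum>i\<in>S. a i * (\<Sum>j\<in>S. b j))"
    by (intro sum_mono mult_left_mono member_le_sum) (use assms in auto)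
  then show ?thesis by (simp add: sum_distrib_right)
qed

lemma abs_le_sq: "\<bar>x::real\<bar> \<le> B \<Longrightarrow> x^2 \<le> B^2"
  by (metis abs_ge_zero power2_abs power_mono)

lemma sq3: "((a::real) - b - c)^2 \<le> 3*a^2 + 3*b^2 + 3*c^2"
proof -
  have "3*a^2 + 3*b^2 + 3*c^2 - (a - b - c)^2 = (a+b)^2 + (a+c)^2 + (b-c)^2"
    by (simp add: power2_eq_square algebra_simps)
  moreover have "(a+b)^2 + (a+c)^2 + (b-c)^2 \<ge> 0" by simp
  ultimately show ?thesis by linarith
qed

context colmodel begin

lemma sumsq_le: "(\<Sum>i=1..n. u i k \<omega> ^ 2) \<le> real n"
proof (cases "cvar n (V k \<omega>) > 0")
  case True then show ?thesis unfolding u_def using zf_sumsq by simp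
next
  case False
  then have "cvar n (V k \<omega>) = 0" using cvar_nonneg[of n "V k \<omega>"] by simp
  then show ?thesis by (simp add: u_def zf_def)
qed

lemma cf2_le: "cf k l \<omega> ^ 2 \<le> real n * real n"
proof -
  have "cf k l \<omega> ^ 2 \<le> (\<Sum>i=1..n. u i k \<omega> ^ 2) * (\<Sum>i=1..n. u i l \<omega> ^ 2)"
    unfolding cf_def by (rule Cauchy_Schwarz_ineq_sum)
  also have "\<dots> \<le> real n * real n" using sumsq_le by (intro mult_mono) (auto intro: sum_nonneg)
  finally show ?thesis .
qed

lemma Df_bounds: "0 \<le> Df k l \<omega>" "Df k l \<omega> \<le> real n * real n"
proof -
  show "0 \<le> Df k l \<omega>" unfolding Df_def by (intro sum_nonneg) auto
  have "Df k l \<omega> \<le> (\<Sum>i=1..n. u i k \<omega> ^ 2) * (\<Sum>i=1..n. u i l \<omega> ^ 2)"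
    unfolding Df_def by (rule sum_mult_le_prod) auto
  also have "\<dots> \<le> real n * real n" using sumsq_le by (intro mult_mono) (auto intro: sum_nonneg)
  finally show "Df k l \<omega> \<le> real n * real n" .
qed

lemma cf_meas: "k \<in> {1..N} \<Longrightarrow> l \<in> {1..N} \<Longrightarrow> cf k l \<in> borel_measurable M"
  unfolding cf_def[abs_def] using u_meas by (intro borel_measurable_sum) auto
lemma Df_meas: "k \<in> {1..N} \<Longrightarrow> l \<in> {1..N} \<Longrightarrow> Df k l \<in> borel_measurable M"
  unfolding Df_def[abs_def] using u_meas by (intro borel_measurable_sum) auto
lemma W_meas: "k \<in> {1..N} \<Longrightarrow> l \<in> {1..N} \<Longrightarrow> W k l \<in> borel_measurable M"
  unfolding W_def[abs_def] using xi_meas by (intro borel_measurable_sum) auto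

lemma xi_bound: "\<bar>xi k p \<omega>\<bar> \<le> real n + 1" unfolding xi_def by (rule yf_bound)

lemma W_bound: "\<bar>W k l \<omega>\<bar> \<le> real (card (Pp n)) * ((real n + 1) * (real n + 1))"
  unfolding W_def
proof (rule abs_sum_le)
  fix p show "\<bar>xi k p \<omega> * xi l p \<omega>\<bar> \<le> (real n + 1) * (real n + 1)"
    unfolding abs_mult by (intro mult_mono xi_bound) auto
qed

lemma EW2: assumes kl: "k \<in> {1..N}" "l \<in> {1..N}" "k \<noteq> l"
  shows "(\<integral>\<omega>. W k l \<omega> ^ 2 \<partial>M) \<le> 6 * real n ^ 3 + 6 * real n ^ 2 + 12"
proof -
  let ?B = "\<lambda>\<omega>. 3 * (real n * real n) * cf k l \<omega> ^ 2 + 3 * (real n * real n) * Df k l \<omega> + 3 * qq^2"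
  have ptw: "AE \<omega> in M. W k l \<omega> ^ 2 \<le> ?B \<omega>"
    using AE_sumsq[OF kl(1)] AE_sumsq[OF kl(2)]
  proof eventually_elim
    case (elim \<omega>)
    let ?c = "cf k l \<omega> ^ 2" and ?d = "Df k l \<omega>"
    have W: "W k l \<omega> = ?c - ?d - qq" using W_eq elim by simp
    have c: "0 \<le> ?c" "?c \<le> real n * real n" using cf2_le by auto
    have d: "0 \<le> ?d" "?d \<le> real n * real n" using Df_bounds by auto
    have "W k l \<omega> ^ 2 \<le> 3 * ?c^2 + 3 * ?d^2 + 3 * qq^2"
      unfolding W by (rule sq3)
    also have "?c^2 \<le> (real n * real n) * ?c" unfolding power2_eq_square[of "?c"] by (rule mult_right_mono) (use c in auto)
    also have "?d^2 \<le> (real n * real n) * ?d" unfolding power2_eq_square[of "?d"] by (rule mult_right_mono) (use d in auto)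
    finally show ?case by (simp add: algebra_simps)
  qed
  have intW: "integrable M (\<lambda>\<omega>. W k l \<omega> ^ 2)"
    by (rule integrable_bnd[where B="(real (card (Pp n)) * ((real n + 1) * (real n + 1)))^2"])
       (use W_meas kl abs_le_sq[OF W_bound] in auto)
  have intc: "integrable M (\<lambda>\<omega>. cf k l \<omega> ^ 2)"
    by (rule integrable_bnd[where B="real n * real n"]) (use cf_meas kl cf2_le in auto)
  have intd: "integrable M (Df k l)"
    by (rule integrable_bnd[where B="real n * real n"]) (use Df_meas kl Df_bounds in auto)
  have "(\<integral>\<omega>. W k l \<omega> ^ 2 \<partial>M) \<le> (\<integral>\<omega>. ?B \<omega> \<partial>M)"
    by (rule integral_mono_AE[OF intW _ ptw]) (use intc intd in auto)
  also have "(\<integral>\<omega>. ?B \<omega> \<partial>M) = 3 * (real n * real n) * (real n + qq) + 3 * (real n * real n) * real n + 3 * qq^2"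
    using intc intd Ecf2[OF kl] EDf[OF kl] by (simp add: prob_space)
  also have "\<dots> \<le> 6 * real n ^ 3 + 6 * real n ^ 2 + 12"
  proof -
    have a: "qq^2 \<le> 4" using qq_le power_mono[of qq 2 2] by simp
    have b: "qq * (real n * real n) \<le> 2 * (real n * real n)" using qq_le by (intro mult_right_mono) auto
    show ?thesis using a b by (simp add: power2_eq_square power3_eq_cube algebra_simps)
  qed
  finally show ?thesis .
qed

end


context colmodel begin


lemma EWW0:
  assumes q: "k \<in> {1..N}" "l \<in> {1..N}" "k \<noteq> l" and q': "k' \<in> {1..N}" "l' \<in> {1..N}" "k' \<noteq> l'"
    and ne: "(k', l') \<noteq> (k, l)" "(k', l') \<noteq> (l, k)"
  shows "(\<integral>\<omega>. W k l \<omega> * W k' l' \<omega> \<partial>M) = 0"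
proof -
  define pos :: "nat \<Rightarrow> nat" where "pos t = [k, l, k', l'] ! t" for t
  have T: "{0,1,2,3::nat} = {0..<4}" by auto
  have term0: "(\<integral>\<omega>. xi k p \<omega> * xi l p \<omega> * (xi k' p' \<omega> * xi l' p' \<omega>) \<partial>M) = 0"
    if p: "p \<in> Pp n" "p' \<in> Pp n" for p p'
  proof -
    define crd :: "nat \<Rightarrow> nat \<times> nat" where "crd t = [p, p, p', p'] ! t" for t
    define t0 :: nat where "t0 = (if k \<notin> {k', l'} then 0 else 1)"
    have prodeq: "(\<Prod>t\<in>{0,1,2,3::nat}. yf (crd t) (V (pos t) \<omega>)) = xi k p \<omega> * xi l p \<omega> * (xi k' p' \<omega> * xi l' p' \<omega>)" for \<omega>
      by (simp add: pos_def crd_def xi_def)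
    have "(\<integral>\<omega>. (\<Prod>t\<in>{0,1,2,3::nat}. (\<lambda>c. yf) (pos t) (crd t) (V (pos t) \<omega>)) \<partial>M) = 0"
    proof (rule indep_prod_zero[OF col_indepV, where B="real n + 1" and tz=t0])
      show "pos ` {0,1,2,3} \<subseteq> {1..N}" using q q' by (auto simp: pos_def)
      show "yf p \<in> borel_measurable (PiM {1..n} (\<lambda>_. borel))" for p by (rule yf_meas)
      show "\<bar>yf p x\<bar> \<le> real n + 1" for p x by (rule yf_bound)
      show "t0 \<in> {0,1,2,3}" by (simp add: t0_def)
      show "t = t0" if "t \<in> {0,1,2,3}" "pos t = pos t0" for t
        using that q q' ne by (auto simp: t0_def pos_def split: if_splits)
      have "crd t0 = p" by (simp add: t0_def crd_def)
      moreover have "pos t0 \<in> {1..N}" using q by (simp add: t0_def pos_def)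
      ultimately show "(\<integral>\<omega>. yf (crd t0) (V (pos t0) \<omega>) \<partial>M) = 0"
        using Exi0[OF _ p(1)] by (simp add: xi_def)
    qed simp
    then show ?thesis using prodeq by simp
  qed
  have intxx: "integrable M (\<lambda>\<omega>. xi k p \<omega> * xi l p \<omega> * (xi k' p' \<omega> * xi l' p' \<omega>))" for p p'
  proof (rule integrable_bnd[where B="((real n + 1) * (real n + 1)) * ((real n + 1) * (real n + 1))"])
    show "(\<lambda>\<omega>. xi k p \<omega> * xi l p \<omega> * (xi k' p' \<omega> * xi l' p' \<omega>)) \<in> borel_measurable M"
      using xi_meas q q' by auto
    fix \<omega>
    have a: "\<bar>xi k p \<omega> * xi l p \<omega>\<bar> \<le> (real n + 1) * (real n + 1)" "\<bar>xi k' p' \<omega> * xi l' p' \<omega>\<bar> \<le> (real n + 1) * (real n + 1)"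
      unfolding abs_mult by (intro mult_mono xi_bound; simp)+
    show "\<bar>xi k p \<omega> * xi l p \<omega> * (xi k' p' \<omega> * xi l' p' \<omega>)\<bar> \<le> ((real n + 1) * (real n + 1)) * ((real n + 1) * (real n + 1))"
      unfolding abs_mult[of "xi k p \<omega> * xi l p \<omega>"] by (rule mult_mono[OF a]) auto
  qed
  have "(\<lambda>\<omega>. W k l \<omega> * W k' l' \<omega>) = (\<lambda>\<omega>. \<Sum>p\<in>Pp n. \<Sum>p'\<in>Pp n. xi k p \<omega> * xi l p \<omega> * (xi k' p' \<omega> * xi l' p' \<omega>))"
    unfolding W_def by (simp add: sum_product)
  then have "(\<integral>\<omega>. W k l \<omega> * W k' l' \<omega> \<partial>M) = (\<Sum>p\<in>Pp n. \<Sum>p'\<in>Pp n. \<integral>\<omega>. xi k p \<omega> * xi l p \<omega> * (xi k' p' \<omega> * xi l' p' \<omega>) \<partial>M)"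
    apply simp
    apply (subst Bochner_Integration.integral_sum)
     apply (rule Bochner_Integration.integrable_sum, use intxx in simp)
    apply (rule sum.cong[OF refl], rule Bochner_Integration.integral_sum)
    using intxx by simp
  also have "\<dots> = 0" using term0 by simp
  finally show ?thesis .
qed

lemma fin_Qs[simp]: "finite Qs" unfolding Qs_def by auto
lemma mem_Qs: "q \<in> Qs \<longleftrightarrow> fst q \<in> {1..N} \<and> snd q \<in> {1..N} \<and> fst q \<noteq> snd q"
  unfolding Qs_def by (cases q) auto

lemma WW_int: "k \<in> {1..N} \<Longrightarrow> l \<in> {1..N} \<Longrightarrow> k' \<in> {1..N} \<Longrightarrow> l' \<in> {1..N} \<Longrightarrow>
   integrable M (\<lambda>\<omega>. W k l \<omega> * W k' l' \<omega>)"
proof (rule integrable_bnd[where B="(real (card (Pp n)) * ((real n + 1) * (real n + 1)))^2"])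
  assume "k \<in> {1..N}" "l \<in> {1..N}" "k' \<in> {1..N}" "l' \<in> {1..N}"
  then show "(\<lambda>\<omega>. W k l \<omega> * W k' l' \<omega>) \<in> borel_measurable M" using W_meas by auto
  fix \<omega>
  show "\<bar>W k l \<omega> * W k' l' \<omega>\<bar> \<le> (real (card (Pp n)) * ((real n + 1) * (real n + 1)))^2"
    unfolding abs_mult power2_eq_square by (intro mult_mono W_bound) auto
qed

lemma EU2: "(\<integral>\<omega>. Uf \<omega> ^ 2 \<partial>M) \<le> 2 * real (card Qs) * (6 * real n ^ 3 + 6 * real n ^ 2 + 12)"
proof -
  let ?E = "\<lambda>q q'. \<integral>\<omega>. W (fst q) (snd q) \<omega> * W (fst q') (snd q') \<omega> \<partial>M"
  have int: "integrable M (\<lambda>\<omega>. W (fst q) (snd q) \<omega> * W (fst q') (snd q') \<omega>)" if "q \<in> Qs" "q' \<in> Qs" for q q'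
    using that by (intro WW_int) (auto simp: mem_Qs)
  have "(\<lambda>\<omega>. Uf \<omega> ^ 2) = (\<lambda>\<omega>. \<Sum>q\<in>Qs. \<Sum>q'\<in>Qs. W (fst q) (snd q) \<omega> * W (fst q') (snd q') \<omega>)"
    unfolding Uf_def by (simp add: power2_eq_square sum_product)
  then have "(\<integral>\<omega>. Uf \<omega> ^ 2 \<partial>M) = (\<Sum>q\<in>Qs. \<Sum>q'\<in>Qs. ?E q q')"
    apply simp
    apply (subst Bochner_Integration.integral_sum)
     apply (rule Bochner_Integration.integrable_sum, use int in simp)
    apply (rule sum.cong[OF refl], rule Bochner_Integration.integral_sum)
    using int by simp
  also have "\<dots> \<le> (\<Sum>q\<in>Qs. 2 * (6 * real n ^ 3 + 6 * real n ^ 2 + 12))"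
  proof (rule sum_mono)
    fix q assume q: "q \<in> Qs"
    obtain k l where kl: "q = (k, l)" by (cases q)
    have kl': "k \<in> {1..N}" "l \<in> {1..N}" "k \<noteq> l" using q kl by (auto simp: mem_Qs)
    have sub: "{q, (l, k)} \<subseteq> Qs" using kl kl' by (auto simp: mem_Qs)
    have "(\<Sum>q'\<in>Qs. ?E q q') = (\<Sum>q'\<in>Qs - {q, (l,k)}. ?E q q') + (\<Sum>q'\<in>{q, (l,k)}. ?E q q')"
      by (rule sum.subset_diff[OF sub fin_Qs])
    also have "(\<Sum>q'\<in>Qs - {q, (l,k)}. ?E q q') = 0"
    proof (rule sum.neutral, rule ballI)
      fix q' assume q': "q' \<in> Qs - {q, (l,k)}"
      obtain k' l' where kl2: "q' = (k', l')" by (cases q')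
      show "?E q q' = 0" unfolding kl kl2 using q' kl2 kl' kl by (intro EWW0) (auto simp: mem_Qs)
    qed
    also have "(\<Sum>q'\<in>{q, (l,k)}. ?E q q') = 2 * (\<integral>\<omega>. W k l \<omega> ^ 2 \<partial>M)"
      using kl kl' W_sym[of l k] by (simp add: power2_eq_square)
    also have "\<dots> \<le> 2 * (6 * real n ^ 3 + 6 * real n ^ 2 + 12)" using EW2[OF kl'] by simp
    finally show "(\<Sum>q'\<in>Qs. ?E q q') \<le> 2 * (6 * real n ^ 3 + 6 * real n ^ 2 + 12)" by simp
  qed
  also have "\<dots> = 2 * real (card Qs) * (6 * real n ^ 3 + 6 * real n ^ 2 + 12)" by simp
  finally show ?thesis .
qed

end


lemma cmean_shift: "n \<ge> 1 \<Longrightarrow> cmean n (\<lambda>j. x j + c) = cmean n x + c"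
  unfolding cmean_def by (simp add: sum.distrib field_simps)
lemma cvar_shift: "n \<ge> 1 \<Longrightarrow> cvar n (\<lambda>j. x j + c) = cvar n x"
  unfolding cvar_def using cmean_shift by simp
lemma zf_shift: "n \<ge> 1 \<Longrightarrow> zf n i (\<lambda>j. x j + c) = zf n i x"
  unfolding zf_def using cmean_shift cvar_shift by simp

lemma pow4_diff: "((a::real) - b)^4 \<le> 8 * a^4 + 8 * b^4"
proof -
  have 1: "(a - b)^2 \<le> 2 * (a^2 + b^2)" using sum_squares_ge_zero[of "a+b" 0]
    by (simp add: power2_eq_square algebra_simps)
  have "(a - b)^4 = ((a - b)^2)^2" by simp
  also have "\<dots> \<le> (2 * (a^2 + b^2))^2" by (rule power_mono[OF 1]) simp
  also have "\<dots> \<le> 8 * a^4 + 8 * b^4"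
    using zero_le_square[of "a^2 - b^2"] by (simp add: power2_eq_square algebra_simps power4_eq_xxxx)
  finally show ?thesis .
qed

lemma mean4_le: fixes y :: "nat \<Rightarrow> real" assumes n: "n \<ge> 1"
  shows "real n * cmean n y ^ 4 \<le> (\<Sum>i=1..n. y i ^ 4)"
proof -
  have c: "card {1..n} = n" by simp
  have a: "(\<Sum>i=1..n. y i)^2 \<le> (\<Sum>i=1..n. y i ^ 2) * real n"
    using sum_squared_le_sum_of_squares[of y "{1..n}"] c by simp
  have b: "(\<Sum>i=1..n. y i ^ 2)^2 \<le> (\<Sum>i=1..n. (y i ^ 2)^2) * real n"
    using sum_squared_le_sum_of_squares[of "\<lambda>i. y i ^ 2" "{1..n}"] c by simp
  have m2: "cmean n y ^ 2 \<le> (\<Sum>i=1..n. y i ^ 2) / real n"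
    unfolding cmean_def using a n by (simp add: power_divide field_simps power2_eq_square)
  have "cmean n y ^ 4 = (cmean n y ^ 2)^2" by simp
  also have "\<dots> \<le> ((\<Sum>i=1..n. y i ^ 2) / real n)^2" by (rule power_mono[OF m2]) simp
  also have "\<dots> \<le> (\<Sum>i=1..n. y i ^ 4) / real n"
    using b n by (simp add: power_divide field_simps power2_eq_square power4_eq_xxxx)
  finally show ?thesis using n by (simp add: field_simps)
qed

lemma dev4_le: fixes y :: "nat \<Rightarrow> real" assumes n: "n \<ge> 1"
  shows "(\<Sum>i=1..n. (y i - cmean n y)^4) \<le> 16 * (\<Sum>i=1..n. y i ^ 4)"
proof -
  have "(\<Sum>i=1..n. (y i - cmean n y)^4) \<le> (\<Sum>i=1..n. 8 * y i ^ 4 + 8 * cmean n y ^ 4)"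
    by (intro sum_mono pow4_diff)
  also have "\<dots> = 8 * (\<Sum>i=1..n. y i ^ 4) + 8 * (real n * cmean n y ^ 4)"
    by (simp add: sum.distrib sum_distrib_left)
  also have "\<dots> \<le> 16 * (\<Sum>i=1..n. y i ^ 4)" using mean4_le[OF n, of y] by simp
  finally show ?thesis .
qed

lemma cvar_alt: "n \<ge> 1 \<Longrightarrow> cvar n y = (\<Sum>i=1..n. y i ^ 2) / real n - cmean n y ^ 2"
proof -
  assume n: "n \<ge> 1"
  have "(\<Sum>i=1..n. (y i - cmean n y)^2) = (\<Sum>i=1..n. y i ^ 2) - 2 * cmean n y * (\<Sum>i=1..n. y i) + real n * cmean n y ^ 2"
    by (simp add: power2_eq_square algebra_simps sum.distrib sum_subtractf sum_distrib_left)
  also have "(\<Sum>i=1..n. y i) = real n * cmean n y" using n unfolding cmean_def by simp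
  finally show ?thesis unfolding cvar_def using n by (simp add: field_simps power2_eq_square)
qed

lemma aux_abs: "(e::real) < - s / 4 \<Longrightarrow> s > 0 \<Longrightarrow> \<bar>s/4\<bar> \<le> \<bar>e\<bar>"
  by (simp add: abs_if)

lemma kurt_bound:
  fixes y :: "nat \<Rightarrow> real" assumes n: "n \<ge> 1" and s: "s > 0"
  shows "(\<Sum>i=1..n. zf n i y ^ 4) \<le> 64 * (\<Sum>i=1..n. y i ^ 4) / s^2
     + real n ^ 2 * (16 * ((\<Sum>i=1..n. y i ^ 2) / real n - s)^2 / s^2 + 4 * cmean n y ^ 2 / s)"
    (is "?L \<le> ?R1 + real n ^ 2 * ?R2")
proof -
  let ?m = "cmean n y" and ?v = "cvar n y"
  have R1: "?R1 \<ge> 0" using s by (intro divide_nonneg_nonneg mult_nonneg_nonneg sum_nonneg) auto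
  have R2: "?R2 \<ge> 0" using s by (intro add_nonneg_nonneg divide_nonneg_nonneg) auto
  show ?thesis
  proof (cases "?v > 0")
    case False
    then have "?v = 0" using cvar_nonneg[of n y] by simp
    then have "?L = 0" by (simp add: zf_def)
    then show ?thesis using R1 R2 by simp
  next
    case vpos: True
    show ?thesis
    proof (cases "?v \<ge> s / 2")
      case True
      have t: "zf n i y ^ 4 = (y i - ?m)^4 / ?v^2" for i
      proof -
        have "sqrt ?v ^ 4 = ?v^2" using vpos
          by (metis less_imp_le num_double numeral_times_numeral power_mult real_sqrt_pow2)
        then show ?thesis unfolding zf_def power_divide by simp
      qed
      have "?L = (\<Sum>i=1..n. (y i - ?m)^4) / ?v^2"
        unfolding t by (simp add: sum_divide_distrib)
      also have "\<dots> \<le> (\<Sum>i=1..n. (y i - ?m)^4) / (s/2)^2"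
        using True s by (intro divide_left_mono sum_nonneg power_mono mult_pos_pos) auto
      also have "\<dots> \<le> (16 * (\<Sum>i=1..n. y i ^ 4)) / (s/2)^2"
        using dev4_le[OF n] s by (intro divide_right_mono) auto
      also have "\<dots> = ?R1" using s by (simp add: power2_eq_square field_simps)
      moreover have "0 \<le> real n ^ 2 * ?R2" using R2 by simp
      ultimately show ?thesis by linarith
    next
      case False
      have sq: "zf n i y ^ 2 \<le> real n" if "i \<in> {1..n}" for i using zf_sq_le[OF that] .
      have "?L \<le> (\<Sum>i=1..n. real n * zf n i y ^ 2)"
      proof (rule sum_mono)
        fix i assume i: "i \<in> {1..n}"
        have "zf n i y ^ 4 = zf n i y ^ 2 * zf n i y ^ 2" by (simp add: power4_eq_xxxx power2_eq_square)
        also have "\<dots> \<le> real n * zf n i y ^ 2" by (rule mult_right_mono[OF sq[OF i]]) simp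
        finally show "zf n i y ^ 4 \<le> real n * zf n i y ^ 2" .
      qed
      also have "\<dots> = real n ^ 2" using zf_sumsq[OF vpos] by (simp add: sum_distrib_left[symmetric] power2_eq_square)
      finally have L: "?L \<le> real n ^ 2" .
      have "?R2 \<ge> 1"
      proof (cases "?m^2 \<le> s / 4")
        case True
        have "(\<Sum>i=1..n. y i ^ 2) / real n = ?v + ?m^2" using cvar_alt[OF n, of y] by simp
        then have lt: "(\<Sum>i=1..n. y i ^ 2) / real n - s < - s / 4" using False True by simp
        then have "\<bar>s/4\<bar> \<le> \<bar>(\<Sum>i=1..n. y i ^ 2) / real n - s\<bar>" using s by (rule aux_abs)
        then have "(s/4)^2 \<le> \<bar>(\<Sum>i=1..n. y i ^ 2) / real n - s\<bar>^2" by (rule abs_le_sq)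
        then have "(s/4)^2 \<le> ((\<Sum>i=1..n. y i ^ 2) / real n - s)^2" by simp
        then have "1 \<le> 16 * ((\<Sum>i=1..n. y i ^ 2) / real n - s)^2 / s^2"
          using s by (simp add: field_simps power2_eq_square)
        moreover have "0 \<le> 4 * ?m^2 / s" using s by simp
        ultimately show ?thesis by linarith
      next
        case False
        then have "1 \<le> 4 * ?m^2 / s" using s by (simp add: field_simps)
        moreover have "0 \<le> 16 * ((\<Sum>i=1..n. y i ^ 2) / real n - s)^2 / s^2" using s by simp
        ultimately show ?thesis by linarith
      qed
      then have "real n ^ 2 * 1 \<le> real n ^ 2 * ?R2" by (intro mult_left_mono) auto
      then show ?thesis using L R1 by linarith
    qed
  qed
qed



locale colmodel2 = colmodel +
  fixes M4 \<delta> :: real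
  assumes dpos: "\<delta> > 0"
  and sig: "\<And>k. k \<in> {1..N} \<Longrightarrow> \<delta> \<le> col_sig2 M A k"
  and int4: "\<And>i k. i \<in> {1..n} \<Longrightarrow> k \<in> {1..N} \<Longrightarrow> integrable M (\<lambda>\<omega>. (A i k \<omega> - col_mu M A k)^4)"
  and mom4: "\<And>i k. i \<in> {1..n} \<Longrightarrow> k \<in> {1..N} \<Longrightarrow> (\<integral>\<omega>. (A i k \<omega> - col_mu M A k)^4 \<partial>M) \<le> M4"
begin

lemma transfer: assumes i: "i \<in> {1..n}" and k: "k \<in> {1..N}" and f: "f \<in> borel_measurable (borel :: real measure)"
  shows "(\<integral>\<omega>. f (A i k \<omega>) \<partial>M) = (\<integral>\<omega>. (f (A 1 k \<omega>) :: real) \<partial>M)"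
proof -
  have 1: "1 \<in> {1..n}" using n2 by auto
  have "(\<integral>\<omega>. f (A i k \<omega>) \<partial>M) = integral\<^sup>L (distr M borel (A i k)) f"
    by (rule integral_distr[symmetric]) (use meas i k f in auto)
  also have "\<dots> = integral\<^sup>L (distr M borel (A 1 k)) f" using ident[OF i k] by simp
  also have "\<dots> = (\<integral>\<omega>. f (A 1 k \<omega>) \<partial>M)"
    by (rule integral_distr) (use meas 1 k f in auto)
  finally show ?thesis .
qed

context fixes k assumes k: "k \<in> {1..N}" begin

definition "mu = col_mu M A k"
definition "s2 = col_sig2 M A k"
definition Y :: "nat \<Rightarrow> 'a \<Rightarrow> real" where "Y i \<omega> = A i k \<omega> - mu"
definition Xs :: "nat \<Rightarrow> 'a \<Rightarrow> real" where "Xs i \<omega> = Y i \<omega> ^ 2 - s2"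

lemma s2_pos: "s2 \<ge> \<delta>" "s2 > 0" using sig[OF k] dpos unfolding s2_def by auto

lemma Y_meas: "i \<in> {1..n} \<Longrightarrow> Y i \<in> borel_measurable M"
  unfolding Y_def[abs_def] using meas k by auto

lemma Y4_int: "i \<in> {1..n} \<Longrightarrow> integrable M (\<lambda>\<omega>. Y i \<omega> ^ 4)"
  unfolding Y_def mu_def using int4 k by auto

lemma Y_small_int:
  assumes i: "i \<in> {1..n}" shows "integrable M (Y i)" "integrable M (\<lambda>\<omega>. Y i \<omega> ^ 2)"
proof -
  have I: "integrable M (\<lambda>\<omega>. 1 + Y i \<omega> ^ 4)" using Y4_int[OF i] by simp
  have b1: "\<bar>y\<bar> \<le> 1 + y^4" for y :: real
  proof (cases "\<bar>y\<bar> \<le> 1")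
    case False
    then have "\<bar>y\<bar> \<le> \<bar>y\<bar>^4" by (simp add: power_increasing[of 1 4 "\<bar>y\<bar>", simplified])
    then show ?thesis by (simp add: power_abs)
  qed (auto intro: order.trans[of _ 1])
  have b2: "y^2 \<le> 1 + y^4" for y :: real
  proof (cases "y^2 \<le> 1")
    case False
    then have "y^2 * 1 \<le> y^2 * y^2" by (intro mult_left_mono) auto
    then show ?thesis by (simp add: power4_eq_xxxx power2_eq_square)
  qed (auto intro: order.trans[of _ 1])
  show "integrable M (Y i)"
    by (rule Bochner_Integration.integrable_bound[OF I]) (use Y_meas[OF i] b1 in auto)
  show "integrable M (\<lambda>\<omega>. Y i \<omega> ^ 2)"
    by (rule Bochner_Integration.integrable_bound[OF I]) (use Y_meas[OF i] b2 in auto)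
qed

lemma EY: assumes i: "i \<in> {1..n}" shows "(\<integral>\<omega>. Y i \<omega> \<partial>M) = 0"
proof -
  have "(\<integral>\<omega>. Y i \<omega> \<partial>M) = (\<integral>\<omega>. A 1 k \<omega> - mu \<partial>M)"
    unfolding Y_def by (rule transfer[OF i k, of "\<lambda>x. x - mu"]) simp
  also have "\<dots> = (\<integral>\<omega>. A 1 k \<omega> \<partial>M) - mu"
  proof -
    have 1: "1 \<in> {1..n}" using n2 by auto
    have "integrable M (\<lambda>\<omega>. Y 1 \<omega> + mu)" using Y_small_int(1)[OF 1] by simp
    then have "integrable M (A 1 k)" by (simp add: Y_def)
    then show ?thesis by (simp add: prob_space)
  qed
  finally show ?thesis by (simp add: mu_def col_mu_def)
qed

lemma EY2: assumes i: "i \<in> {1..n}" shows "(\<integral>\<omega>. Y i \<omega> ^ 2 \<partial>M) = s2"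
proof -
  have "(\<integral>\<omega>. Y i \<omega> ^ 2 \<partial>M) = (\<integral>\<omega>. (A 1 k \<omega> - mu)^2 \<partial>M)"
    unfolding Y_def by (rule transfer[OF i k, of "\<lambda>x. (x - mu)^2"]) simp
  then show ?thesis by (simp add: s2_def col_sig2_def mu_def col_mu_def)
qed

lemma Y_indep: "indep_vars (\<lambda>_. borel) Y {1..n}"
  unfolding Y_def[abs_def]
  by (rule indep_vars_compose2[OF entry_indep[OF k], where Y="\<lambda>_ x. x - mu"]) simp

lemma X_indep: "indep_vars (\<lambda>_. borel) Xs {1..n}"
  unfolding Xs_def[abs_def] Y_def
  by (rule indep_vars_compose2[OF entry_indep[OF k], where Y="\<lambda>_ x. (x - mu)^2 - s2"]) simp

lemma X2_int: assumes i: "i \<in> {1..n}" shows "integrable M (\<lambda>\<omega>. Xs i \<omega> ^ 2)"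
proof -
  have "(\<lambda>\<omega>. Xs i \<omega> ^ 2) = (\<lambda>\<omega>. Y i \<omega> ^ 4 - 2 * s2 * Y i \<omega> ^ 2 + s2^2)"
    unfolding Xs_def by (simp add: power2_eq_square power4_eq_xxxx algebra_simps)
  then show ?thesis using Y4_int[OF i] Y_small_int(2)[OF i] by simp
qed

lemma EX: "i \<in> {1..n} \<Longrightarrow> (\<integral>\<omega>. Xs i \<omega> \<partial>M) = 0"
  unfolding Xs_def using EY2 Y_small_int(2) by (simp add: prob_space)

lemma EX2: assumes i: "i \<in> {1..n}" shows "(\<integral>\<omega>. Xs i \<omega> ^ 2 \<partial>M) \<le> M4"
proof -
  have "(\<lambda>\<omega>. Xs i \<omega> ^ 2) = (\<lambda>\<omega>. Y i \<omega> ^ 4 - 2 * s2 * Y i \<omega> ^ 2 + s2^2)"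
    unfolding Xs_def by (simp add: power2_eq_square power4_eq_xxxx algebra_simps)
  then have "(\<integral>\<omega>. Xs i \<omega> ^ 2 \<partial>M) = (\<integral>\<omega>. Y i \<omega> ^ 4 \<partial>M) - 2 * s2 * s2 + s2^2"
    using Y4_int[OF i] Y_small_int(2)[OF i] EY2[OF i] by (simp add: prob_space)
  also have "\<dots> \<le> (\<integral>\<omega>. Y i \<omega> ^ 4 \<partial>M)" by (simp add: power2_eq_square)
  also have "\<dots> \<le> M4" using mom4[OF i k] by (simp add: Y_def mu_def)
  finally show ?thesis .
qed

lemma ESY2: "(\<integral>\<omega>. (\<Sum>i=1..n. Y i \<omega>)^2 \<partial>M) = real n * s2"
  using indep_sum_sq[OF Y_indep _ Y_small_int(2) EY] EY2 by simp

lemma ESX2: "(\<integral>\<omega>. (\<Sum>i=1..n. Xs i \<omega>)^2 \<partial>M) \<le> real n * M4"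
proof -
  have "(\<integral>\<omega>. (\<Sum>i=1..n. Xs i \<omega>)^2 \<partial>M) = (\<Sum>i=1..n. \<integral>\<omega>. Xs i \<omega> ^ 2 \<partial>M)"
    using indep_sum_sq[OF X_indep _ X2_int EX] by simp
  also have "\<dots> \<le> (\<Sum>i=1..n. M4)" by (intro sum_mono EX2) auto
  finally show ?thesis by simp
qed

lemma u_Y: "u i k \<omega> = zf n i (\<lambda>j. Y j \<omega>)" if i: "i \<in> {1..n}"
proof -
  have "u i k \<omega> = zf n i (\<lambda>j. Y j \<omega> + mu)"
    unfolding u_def V_def Y_def by (rule zf_cong) (use i in auto)
  also have "\<dots> = zf n i (\<lambda>j. Y j \<omega>)" by (rule zf_shift) (use n2 in auto)
  finally show ?thesis .
qed

lemma u4_ptw: "(\<Sum>i=1..n. u i k \<omega> ^ 4) \<le> 64 * (\<Sum>i=1..n. Y i \<omega> ^ 4) / s2^2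
    + 16 * (\<Sum>i=1..n. Xs i \<omega>)^2 / s2^2 + 4 * (\<Sum>i=1..n. Y i \<omega>)^2 / s2"
proof -
  have n1': "n \<ge> 1" using n2 by simp
  have "(\<Sum>i=1..n. u i k \<omega> ^ 4) = (\<Sum>i=1..n. zf n i (\<lambda>j. Y j \<omega>) ^ 4)"
    by (rule sum.cong) (auto simp: u_Y)
  also have "\<dots> \<le> 64 * (\<Sum>i=1..n. Y i \<omega> ^ 4) / s2^2
     + real n ^ 2 * (16 * ((\<Sum>i=1..n. Y i \<omega> ^ 2) / real n - s2)^2 / s2^2 + 4 * cmean n (\<lambda>j. Y j \<omega>) ^ 2 / s2)"
    by (rule kurt_bound[OF n1' s2_pos(2)])
  also have "real n ^ 2 * (16 * ((\<Sum>i=1..n. Y i \<omega> ^ 2) / real n - s2)^2 / s2^2 + 4 * cmean n (\<lambda>j. Y j \<omega>) ^ 2 / s2)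
     = 16 * (\<Sum>i=1..n. Xs i \<omega>)^2 / s2^2 + 4 * (\<Sum>i=1..n. Y i \<omega>)^2 / s2"
  proof -
    have a: "real n ^ 2 * ((\<Sum>i=1..n. Y i \<omega> ^ 2) / real n - s2)^2 = (\<Sum>i=1..n. Xs i \<omega>)^2"
    proof -
      have "(\<Sum>i=1..n. Xs i \<omega>) = (\<Sum>i=1..n. Y i \<omega> ^ 2) - real n * s2"
        unfolding Xs_def by (simp add: sum_subtractf)
      moreover have "real n * ((\<Sum>i=1..n. Y i \<omega> ^ 2) / real n - s2) = (\<Sum>i=1..n. Y i \<omega> ^ 2) - real n * s2"
        using n1' by (simp add: field_simps)
      ultimately show ?thesis by (metis power_mult_distrib)
    qed
    have b: "real n ^ 2 * cmean n (\<lambda>j. Y j \<omega>) ^ 2 = (\<Sum>i=1..n. Y i \<omega>)^2"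
      unfolding cmean_def using n1' by (simp add: power2_eq_square field_simps)
    show ?thesis using a b by (simp add: algebra_simps)
  qed
  finally show ?thesis by simp
qed

lemma Eu4: "(\<integral>\<omega>. (\<Sum>i=1..n. u i k \<omega> ^ 4) \<partial>M) \<le> real n * (80 * M4 / \<delta>^2 + 4)"
proof -
  let ?R = "\<lambda>\<omega>. 64 * (\<Sum>i=1..n. Y i \<omega> ^ 4) / s2^2
    + 16 * (\<Sum>i=1..n. Xs i \<omega>)^2 / s2^2 + 4 * (\<Sum>i=1..n. Y i \<omega>)^2 / s2"
  have iY4: "integrable M (\<lambda>\<omega>. \<Sum>i=1..n. Y i \<omega> ^ 4)" using Y4_int by auto
  have iX: "integrable M (\<lambda>\<omega>. (\<Sum>i=1..n. Xs i \<omega>)^2)"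
    by (rule indep_sum_sq_int[OF X_indep _ X2_int]) auto
  have iY: "integrable M (\<lambda>\<omega>. (\<Sum>i=1..n. Y i \<omega>)^2)"
    by (rule indep_sum_sq_int[OF Y_indep _ Y_small_int(2)]) auto
  have iL: "integrable M (\<lambda>\<omega>. \<Sum>i=1..n. u i k \<omega> ^ 4)"
  proof (rule integrable_bnd[where B="real n * (real n * real n)"])
    show "(\<lambda>\<omega>. \<Sum>i=1..n. u i k \<omega> ^ 4) \<in> borel_measurable M" using u_meas k by auto
    fix \<omega>
    have "\<bar>\<Sum>i=1..n. u i k \<omega> ^ 4\<bar> \<le> real (card {1..n}) * (real n * real n)"
    proof (rule abs_sum_le)
      fix i assume i: "i \<in> {1..n}"
      have "u i k \<omega> ^ 2 \<le> real n" unfolding u_def by (rule zf_sq_le[OF i])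
      then have "(u i k \<omega> ^ 2)^2 \<le> (real n)^2" by (intro power_mono) auto
      moreover have "u i k \<omega> ^ 4 = (u i k \<omega> ^ 2)^2" by (simp add: power4_eq_xxxx power2_eq_square)
      ultimately show "\<bar>u i k \<omega> ^ 4\<bar> \<le> real n * real n" by (simp add: power2_eq_square)
    qed
    then show "\<bar>\<Sum>i=1..n. u i k \<omega> ^ 4\<bar> \<le> real n * (real n * real n)" by simp
  qed
  have "(\<integral>\<omega>. (\<Sum>i=1..n. u i k \<omega> ^ 4) \<partial>M) \<le> (\<integral>\<omega>. ?R \<omega> \<partial>M)"
    by (rule integral_mono[OF iL]) (use iY4 iX iY u4_ptw in auto)
  also have "(\<integral>\<omega>. ?R \<omega> \<partial>M) = 64 * (\<integral>\<omega>. (\<Sum>i=1..n. Y i \<omega> ^ 4) \<partial>M) / s2^2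
    + 16 * (\<integral>\<omega>. (\<Sum>i=1..n. Xs i \<omega>)^2 \<partial>M) / s2^2 + 4 * (\<integral>\<omega>. (\<Sum>i=1..n. Y i \<omega>)^2 \<partial>M) / s2"
    using iY4 iX iY by simp
  also have "\<dots> \<le> 64 * (real n * M4) / s2^2 + 16 * (real n * M4) / s2^2 + 4 * (real n * s2) / s2"
  proof -
    have "(\<integral>\<omega>. (\<Sum>i=1..n. Y i \<omega> ^ 4) \<partial>M) = (\<Sum>i=1..n. \<integral>\<omega>. Y i \<omega> ^ 4 \<partial>M)"
      by (rule Bochner_Integration.integral_sum) (use Y4_int in auto)
    also have "\<dots> \<le> (\<Sum>i=1..n. M4)" using mom4 k by (intro sum_mono) (auto simp: Y_def mu_def)
    finally have a: "(\<integral>\<omega>. (\<Sum>i=1..n. Y i \<omega> ^ 4) \<partial>M) \<le> real n * M4" by simp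
    show ?thesis using a ESX2 ESY2 s2_pos by (intro add_mono divide_right_mono mult_left_mono) auto
  qed
  also have "\<dots> = real n * (80 * M4 / s2^2 + 4)" using s2_pos by (simp add: field_simps)
  also have "\<dots> \<le> real n * (80 * M4 / \<delta>^2 + 4)"
  proof -
    have M4: "M4 \<ge> 0"
    proof -
      have 1: "1 \<in> {1..n}" using n2 by auto
      have "0 \<le> (\<integral>\<omega>. (A 1 k \<omega> - col_mu M A k)^4 \<partial>M)" by (intro integral_nonneg_AE AE_I2) simp
      then show ?thesis using mom4[OF 1 k] by linarith
    qed
    have "\<delta>^2 \<le> s2^2" using s2_pos dpos by (intro power_mono) auto
    then have "M4 / s2^2 \<le> M4 / \<delta>^2" using M4 dpos s2_pos by (intro divide_left_mono) auto
    then show ?thesis by (intro mult_left_mono) auto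
  qed
  finally show ?thesis .
qed

end

end


context colmodel2 begin

definition Sf :: "'a \<Rightarrow> real" where
  "Sf \<omega> = (\<Sum>i\<in>{1..n}. \<Sum>j\<in>{1..n} - {i}. (Gmat n N A i j \<omega>)^2)"
definition T1 :: "'a \<Rightarrow> real" where
  "T1 \<omega> = (\<Sum>k\<in>{1..N}. \<Sum>i=1..n. u i k \<omega> ^ 4) / (real n * real N ^ 2)"

lemma Qs_Sigma: "Qs = Sigma {1..N} (\<lambda>k. {1..N} - {k})"
  unfolding Qs_def by auto

lemma card_Qs: "real (card Qs) \<le> real N ^ 2"
proof -
  have "Qs \<subseteq> {1..N} \<times> {1..N}" unfolding Qs_def by auto
  then have "card Qs \<le> card ({1..N} \<times> {1..N})" by (intro card_mono) auto
  then have "real (card Qs) \<le> real (N * N)" by (simp del: of_nat_mult)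
  then show ?thesis by (simp add: power2_eq_square)
qed

lemma sum_KK: "(\<Sum>k\<in>{1..N}. \<Sum>l\<in>{1..N}. F k l) = (\<Sum>k\<in>{1..N}. F k k) + (\<Sum>q\<in>Qs. (F (fst q) (snd q) :: real))"
proof -
  have "(\<Sum>l\<in>{1..N}. F k l) = F k k + (\<Sum>l\<in>{1..N}-{k}. F k l)" if "k \<in> {1..N}" for k
    using that by (simp add: sum.remove)
  then have "(\<Sum>k\<in>{1..N}. \<Sum>l\<in>{1..N}. F k l) = (\<Sum>k\<in>{1..N}. F k k) + (\<Sum>k\<in>{1..N}. \<Sum>l\<in>{1..N}-{k}. F k l)"
    by (simp add: sum.distrib)
  also have "(\<Sum>k\<in>{1..N}. \<Sum>l\<in>{1..N}-{k}. F k l) = (\<Sum>q\<in>Qs. F (fst q) (snd q))"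
    unfolding Qs_Sigma by (subst sum.Sigma) (auto simp: split_beta)
  finally show ?thesis .
qed

lemma S_ident:
  assumes N1: "N \<ge> 1" and sq: "\<forall>k\<in>{1..N}. (\<Sum>i=1..n. u i k \<omega> ^ 2) = real n"
  shows "Sf \<omega> / real n = real n / real N - T1 \<omega> + Uf \<omega> / (real n * real N ^ 2) + real (card Qs) * qq / (real n * real N ^ 2)"
proof -
  let ?F = "\<lambda>k l. (\<Sum>p\<in>Pp n. u (fst p) k \<omega> * u (snd p) k \<omega> * (u (fst p) l \<omega> * u (snd p) l \<omega>))"
  have G: "Gmat n N A i j \<omega> = (\<Sum>k=1..N. u i k \<omega> * u j k \<omega>) / real N" if "i \<in> {1..n}" "j \<in> {1..n}" for i j
    unfolding Gmat_def using that by (simp add: u_Zmat)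
  have "Sf \<omega> = (\<Sum>p\<in>Pp n. (Gmat n N A (fst p) (snd p) \<omega>)^2)"
    unfolding Sf_def sum_Pp[of "\<lambda>i j. (Gmat n N A i j \<omega>)^2"] ..
  also have "\<dots> = (\<Sum>p\<in>Pp n. (\<Sum>k=1..N. u (fst p) k \<omega> * u (snd p) k \<omega>)^2) / real N ^ 2"
    unfolding sum_divide_distrib by (rule sum.cong[OF refl]) (auto simp: G mem_Pp power_divide)
  also have "(\<Sum>p\<in>Pp n. (\<Sum>k=1..N. u (fst p) k \<omega> * u (snd p) k \<omega>)^2) = (\<Sum>k=1..N. \<Sum>l=1..N. ?F k l)"
  proof -
    have "(\<Sum>p\<in>Pp n. (\<Sum>k=1..N. u (fst p) k \<omega> * u (snd p) k \<omega>)^2)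
        = (\<Sum>p\<in>Pp n. \<Sum>k=1..N. \<Sum>l=1..N. u (fst p) k \<omega> * u (snd p) k \<omega> * (u (fst p) l \<omega> * u (snd p) l \<omega>))"
      by (simp add: power2_eq_square sum_product)
    also have "\<dots> = (\<Sum>k=1..N. \<Sum>p\<in>Pp n. \<Sum>l=1..N. u (fst p) k \<omega> * u (snd p) k \<omega> * (u (fst p) l \<omega> * u (snd p) l \<omega>))"
      by (rule sum.swap)
    also have "\<dots> = (\<Sum>k=1..N. \<Sum>l=1..N. ?F k l)"
      by (rule sum.cong[OF refl], rule sum.swap)
    finally show ?thesis .
  qed
  also have "(\<Sum>k=1..N. \<Sum>l=1..N. ?F k l) = (\<Sum>k\<in>{1..N}. ?F k k) + (\<Sum>q\<in>Qs. ?F (fst q) (snd q))"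
    by (rule sum_KK)
  also have "(\<Sum>k\<in>{1..N}. ?F k k) = (\<Sum>k\<in>{1..N}. real n ^ 2 - (\<Sum>i=1..n. u i k \<omega> ^ 4))"
  proof (rule sum.cong[OF refl])
    fix k assume k: "k \<in> {1..N}"
    have "cf k k \<omega> = real n" unfolding cf_def using sq k by (simp add: power2_eq_square)
    moreover have "Df k k \<omega> = (\<Sum>i=1..n. u i k \<omega> ^ 4)" unfolding Df_def
      by (simp add: power2_eq_square power4_eq_xxxx mult.assoc)
    ultimately show "?F k k = real n ^ 2 - (\<Sum>i=1..n. u i k \<omega> ^ 4)" unfolding X_eq by simp
  qed
  also have "(\<Sum>q\<in>Qs. ?F (fst q) (snd q)) = (\<Sum>q\<in>Qs. W (fst q) (snd q) \<omega> + qq)"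
  proof (rule sum.cong[OF refl])
    fix q assume q: "q \<in> Qs"
    then have "fst q \<in> {1..N}" "snd q \<in> {1..N}" by (auto simp: mem_Qs)
    then show "?F (fst q) (snd q) = W (fst q) (snd q) \<omega> + qq"
      unfolding X_eq using W_eq sq by simp
  qed
  also have "\<dots> = Uf \<omega> + real (card Qs) * qq" unfolding Uf_def by (simp add: sum.distrib)
  finally have "Sf \<omega> = (real N * real n ^ 2 - (\<Sum>k\<in>{1..N}. \<Sum>i=1..n. u i k \<omega> ^ 4) + (Uf \<omega> + real (card Qs) * qq)) / real N ^ 2"
    by (simp add: sum_subtractf)
  then show ?thesis unfolding T1_def using N1 n2 by (simp add: field_simps power2_eq_square)
qed

lemma u4_int: "k \<in> {1..N} \<Longrightarrow> integrable M (\<lambda>\<omega>. \<Sum>i=1..n. u i k \<omega> ^ 4)"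
proof (rule Bochner_Integration.integrable_sum)
  fix i assume k: "k \<in> {1..N}" and i: "i \<in> {1..n}"
  show "integrable M (\<lambda>\<omega>. u i k \<omega> ^ 4)"
  proof (rule integrable_bnd[where B="real n * real n"])
    show "(\<lambda>\<omega>. u i k \<omega> ^ 4) \<in> borel_measurable M" using u_meas k i by auto
    fix \<omega>
    have "u i k \<omega> ^ 2 \<le> real n" unfolding u_def by (rule zf_sq_le[OF i])
    then have "(u i k \<omega> ^ 2)^2 \<le> (real n)^2" by (intro power_mono) auto
    moreover have "u i k \<omega> ^ 4 = (u i k \<omega> ^ 2)^2" by (simp add: power4_eq_xxxx power2_eq_square)
    ultimately show "\<bar>u i k \<omega> ^ 4\<bar> \<le> real n * real n" by (simp add: power2_eq_square)
  qed
qed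

lemma T1_int: "integrable M T1"
  unfolding T1_def[abs_def]
  by (rule Bochner_Integration.integrable_divide, rule Bochner_Integration.integrable_sum, rule u4_int)

lemma T1_nonneg: "T1 \<omega> \<ge> 0"
  unfolding T1_def by (intro divide_nonneg_nonneg sum_nonneg) auto

lemma ET1: assumes N1: "N \<ge> 1" shows "(\<integral>\<omega>. T1 \<omega> \<partial>M) \<le> (80 * M4 / \<delta>^2 + 4) / real N"
proof -
  have "(\<integral>\<omega>. T1 \<omega> \<partial>M) = (\<Sum>k\<in>{1..N}. \<integral>\<omega>. (\<Sum>i=1..n. u i k \<omega> ^ 4) \<partial>M) / (real n * real N ^ 2)"
    unfolding T1_def using u4_int by (simp add: Bochner_Integration.integral_sum)
  also have "\<dots> \<le> (\<Sum>k\<in>{1..N}. real n * (80 * M4 / \<delta>^2 + 4)) / (real n * real N ^ 2)"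
    by (intro divide_right_mono sum_mono Eu4) auto
  also have "\<dots> = (80 * M4 / \<delta>^2 + 4) / real N" using N1 n2 by (simp add: power2_eq_square field_simps)
  finally show ?thesis .
qed

lemma Uf_meas: "Uf \<in> borel_measurable M"
  unfolding Uf_def[abs_def] using W_meas by (intro borel_measurable_sum) (auto simp: mem_Qs)

lemma Uf2_int: "integrable M (\<lambda>\<omega>. Uf \<omega> ^ 2)"
proof -
  have "(\<lambda>\<omega>. Uf \<omega> ^ 2) = (\<lambda>\<omega>. \<Sum>q\<in>Qs. \<Sum>q'\<in>Qs. W (fst q) (snd q) \<omega> * W (fst q') (snd q') \<omega>)"
    unfolding Uf_def by (simp add: power2_eq_square sum_product)
  moreover have "integrable M (\<lambda>\<omega>. W (fst q) (snd q) \<omega> * W (fst q') (snd q') \<omega>)" if "q \<in> Qs" "q' \<in> Qs" for q q'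
    using that by (intro WW_int) (auto simp: mem_Qs)
  ultimately show ?thesis by simp
qed

lemma T1_meas: "T1 \<in> borel_measurable M"
  using T1_int by auto

lemma abs4: "\<bar>(x::real) - y + z + w\<bar> \<le> \<bar>x\<bar> + \<bar>y\<bar> + \<bar>z\<bar> + \<bar>w\<bar>" by arith

lemma per_m:
  assumes N1: "N \<ge> 1" and e: "e > 0" and close: "\<bar>real n / real N - a\<bar> + qq / real n \<le> e / 3"
  shows "measure M {\<omega> \<in> space M. \<bar>Sf \<omega> / real n - a\<bar> > e}
     \<le> 3 * (80 * M4 / \<delta>^2 + 4) / (e * real N) + 216 * real n / (e^2 * real N ^ 2)"
proof -
  define cU where "cU = e / 3 * (real n * real N ^ 2)"
  have cU: "cU > 0" unfolding cU_def using e N1 n2 by simp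
  define B1 where "B1 = {\<omega> \<in> space M. e / 3 \<le> T1 \<omega>}"
  define B2 where "B2 = {\<omega> \<in> space M. cU^2 \<le> Uf \<omega> ^ 2}"
  note T1_meas[measurable] Uf_meas[measurable]
  have B1s: "B1 \<in> sets M" unfolding B1_def by measurable
  have B2s: "B2 \<in> sets M" unfolding B2_def by measurable
  have AEsq: "AE \<omega> in M. \<forall>k\<in>{1..N}. (\<Sum>i=1..n. u i k \<omega> ^ 2) = real n"
    by (rule AE_finite_allI[OF finite_atLeastAtMost]) (rule AE_sumsq)
  have incl: "AE \<omega> in M. \<omega> \<in> {\<omega> \<in> space M. \<bar>Sf \<omega> / real n - a\<bar> > e} \<longrightarrow> \<omega> \<in> B1 \<union> B2"
    using AEsq
  proof eventually_elim
    case (elim \<omega>)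
    show ?case
    proof (rule impI, rule ccontr)
      assume A: "\<omega> \<in> {\<omega> \<in> space M. \<bar>Sf \<omega> / real n - a\<bar> > e}" and nB: "\<omega> \<notin> B1 \<union> B2"
      then have sp: "\<omega> \<in> space M" and gt: "\<bar>Sf \<omega> / real n - a\<bar> > e" by auto
      have t1: "T1 \<omega> < e / 3" using nB sp unfolding B1_def by auto
      have "Uf \<omega> ^ 2 < cU ^ 2" using nB sp unfolding B2_def by auto
      then have "\<bar>Uf \<omega>\<bar> < cU" using cU power2_less_imp_less[of "\<bar>Uf \<omega>\<bar>" cU] by simp
      then have u: "\<bar>Uf \<omega>\<bar> / (real n * real N ^ 2) < e / 3"
        unfolding cU_def using N1 n2 by (simp add: field_simps)
      have qpos: "real (card Qs) * qq / (real n * real N ^ 2) \<le> qq / real n"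
      proof -
        have "real (card Qs) * qq \<le> real N ^ 2 * qq" using card_Qs qq_le by (intro mult_right_mono) auto
        then show ?thesis using N1 n2 by (simp add: field_simps)
      qed
      have q0: "0 \<le> real (card Qs) * qq / (real n * real N ^ 2)" using qq_le by simp
      have eq: "Sf \<omega> / real n - a = (real n / real N - a) - T1 \<omega> + Uf \<omega> / (real n * real N ^ 2)
          + real (card Qs) * qq / (real n * real N ^ 2)"
        using S_ident[OF N1 elim] by simp
      have h: "\<bar>(real n / real N - a) - T1 \<omega> + Uf \<omega> / (real n * real N ^ 2) + real (card Qs) * qq / (real n * real N ^ 2)\<bar>
         \<le> \<bar>real n / real N - a\<bar> + \<bar>T1 \<omega>\<bar> + \<bar>Uf \<omega> / (real n * real N ^ 2)\<bar> + \<bar>real (card Qs) * qq / (real n * real N ^ 2)\<bar>"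
        by (rule abs4)
      have h1: "\<bar>T1 \<omega>\<bar> = T1 \<omega>" using T1_nonneg[of \<omega>] by simp
      have h2: "\<bar>real (card Qs) * qq / (real n * real N ^ 2)\<bar> = real (card Qs) * qq / (real n * real N ^ 2)"
        using q0 by (rule abs_of_nonneg)
      have h3: "\<bar>Uf \<omega> / (real n * real N ^ 2)\<bar> = \<bar>Uf \<omega>\<bar> / (real n * real N ^ 2)"
        by (simp add: abs_divide)
      have h': "\<bar>(real n / real N - a) - T1 \<omega> + Uf \<omega> / (real n * real N ^ 2) + real (card Qs) * qq / (real n * real N ^ 2)\<bar>
         \<le> \<bar>real n / real N - a\<bar> + T1 \<omega> + \<bar>Uf \<omega>\<bar> / (real n * real N ^ 2) + real (card Qs) * qq / (real n * real N ^ 2)"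
        using h unfolding h1 h2 h3 .
      have hA: "\<bar>Sf \<omega> / real n - a\<bar> = \<bar>(real n / real N - a) - T1 \<omega> + Uf \<omega> / (real n * real N ^ 2)
          + real (card Qs) * qq / (real n * real N ^ 2)\<bar>" using arg_cong[where f=abs, OF eq] .
      have "\<bar>Sf \<omega> / real n - a\<bar> \<le> \<bar>real n / real N - a\<bar> + T1 \<omega> + \<bar>Uf \<omega>\<bar> / (real n * real N ^ 2)
          + real (card Qs) * qq / (real n * real N ^ 2)"
        by (rule ord_eq_le_trans[OF hA h'])
      then have "\<bar>Sf \<omega> / real n - a\<bar> < e"
        using close t1 u qpos by linarith
      then show False using gt by simp
    qed
  qed
  have "measure M {\<omega> \<in> space M. \<bar>Sf \<omega> / real n - a\<bar> > e} \<le> measure M (B1 \<union> B2)"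
    by (rule finite_measure_mono_AE[OF incl]) (use B1s B2s in auto)
  also have "\<dots> \<le> measure M B1 + measure M B2" by (rule measure_Un_le[OF B1s B2s])
  also have "measure M B1 \<le> (\<integral>\<omega>. T1 \<omega> \<partial>M) / (e / 3)"
    unfolding B1_def by (rule integral_Markov_inequality_measure[OF T1_int B1s]) (use T1_nonneg e in auto)
  also have "\<dots> \<le> ((80 * M4 / \<delta>^2 + 4) / real N) / (e / 3)"
    by (rule divide_right_mono[OF ET1[OF N1]]) (use e in auto)
  also have "measure M B2 \<le> (\<integral>\<omega>. Uf \<omega> ^ 2 \<partial>M) / cU^2"
    unfolding B2_def by (rule integral_Markov_inequality_measure[OF Uf2_int B2s]) (use cU in auto)
  also have "\<dots> \<le> (2 * real N ^ 2 * (12 * real n ^ 3)) / cU^2"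
  proof (rule divide_right_mono)
    have "6 * real n ^ 3 + 6 * real n ^ 2 + 12 \<le> 12 * real n ^ 3"
    proof -
      have n2r: "real n \<ge> 2" using n2 by simp
      have "real n ^ 2 * 2 \<le> real n ^ 2 * real n" by (rule mult_left_mono[OF n2r]) simp
      moreover have "(2::real) ^ 3 \<le> real n ^ 3" by (rule power_mono[OF n2r]) simp
      ultimately show ?thesis by (simp add: power3_eq_cube power2_eq_square)
    qed
    then have "2 * real (card Qs) * (6 * real n ^ 3 + 6 * real n ^ 2 + 12) \<le> 2 * real N ^ 2 * (12 * real n ^ 3)"
      using card_Qs by (intro mult_mono) auto
    then show "(\<integral>\<omega>. Uf \<omega> ^ 2 \<partial>M) \<le> 2 * real N ^ 2 * (12 * real n ^ 3)" using EU2 by linarith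
  qed simp
  also have "((80 * M4 / \<delta>^2 + 4) / real N) / (e / 3) + (2 * real N ^ 2 * (12 * real n ^ 3)) / cU^2
      = 3 * (80 * M4 / \<delta>^2 + 4) / (e * real N) + 216 * real n / (e^2 * real N ^ 2)"
    unfolding cU_def using e N1 n2 by (simp add: field_simps power2_eq_square power3_eq_cube)
  finally show ?thesis by simp
qed

end


lemma mom_from_mgf:
  fixes Mm :: "'a measure" and Z :: "'a \<Rightarrow> real"
  assumes ps: "prob_space Mm" and Zm: "Z \<in> borel_measurable Mm" and t0: "t0 > 0" and s: "\<sigma>2 \<le> dmax"
    and I: "integrable Mm (\<lambda>\<omega>. exp (t0 * (Z \<omega>^2 - \<sigma>2)))"
    and B: "(\<integral>\<omega>. exp (t0 * (Z \<omega>^2 - \<sigma>2)) \<partial>Mm) \<le> C * exp (d * t0^2)"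
  shows "integrable Mm (\<lambda>\<omega>. Z \<omega>^4)"
    "(\<integral>\<omega>. Z \<omega>^4 \<partial>Mm) \<le> (2 * exp (t0 * dmax) / t0^2) * (C * exp (d * t0^2))"
proof -
  define K where "K = 2 * exp (t0 * dmax) / t0^2"
  have K: "K \<ge> 0" unfolding K_def by simp
  have ptw: "Z \<omega>^4 \<le> K * exp (t0 * (Z \<omega>^2 - \<sigma>2))" for \<omega>
  proof -
    define x where "x = t0 * Z \<omega>^2"
    have x0: "x \<ge> 0" unfolding x_def using t0 by simp
    have "x^2 / 2 \<le> exp x" using exp_lower_Taylor_quadratic[OF x0] x0 by simp
    then have 1: "t0^2 * Z \<omega>^4 \<le> 2 * exp x"
      unfolding x_def by (simp add: power_mult_distrib power2_eq_square power4_eq_xxxx field_simps)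
    have "exp x = exp (t0 * \<sigma>2) * exp (t0 * (Z \<omega>^2 - \<sigma>2))"
      unfolding x_def by (simp add: exp_add[symmetric] algebra_simps)
    also have "\<dots> \<le> exp (t0 * dmax) * exp (t0 * (Z \<omega>^2 - \<sigma>2))"
      using s t0 by (intro mult_right_mono) auto
    finally have "t0^2 * Z \<omega>^4 \<le> 2 * exp (t0 * dmax) * exp (t0 * (Z \<omega>^2 - \<sigma>2))" using 1 by simp
    then show ?thesis unfolding K_def using t0 by (simp add: field_simps)
  qed
  have I2: "integrable Mm (\<lambda>\<omega>. K * exp (t0 * (Z \<omega>^2 - \<sigma>2)))" using I by simp
  show int: "integrable Mm (\<lambda>\<omega>. Z \<omega>^4)"
  proof (rule Bochner_Integration.integrable_bound[OF I2])
    show "(\<lambda>\<omega>. Z \<omega>^4) \<in> borel_measurable Mm" using Zm by simp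
    show "AE \<omega> in Mm. norm (Z \<omega>^4) \<le> norm (K * exp (t0 * (Z \<omega>^2 - \<sigma>2)))"
      using ptw K by (intro AE_I2) (simp add: abs_mult)
  qed
  have "(\<integral>\<omega>. Z \<omega>^4 \<partial>Mm) \<le> (\<integral>\<omega>. K * exp (t0 * (Z \<omega>^2 - \<sigma>2)) \<partial>Mm)"
    by (rule integral_mono[OF int I2 ptw])
  also have "\<dots> = K * (\<integral>\<omega>. exp (t0 * (Z \<omega>^2 - \<sigma>2)) \<partial>Mm)" by simp
  also have "\<dots> \<le> K * (C * exp (d * t0^2))" using B K by (intro mult_left_mono) auto
  finally show "(\<integral>\<omega>. Z \<omega>^4 \<partial>Mm) \<le> (2 * exp (t0 * dmax) / t0^2) * (C * exp (d * t0^2))"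
    unfolding K_def .
qed

theorem lemma1:
  fixes M :: "nat \<Rightarrow> 'a measure"
    and n N :: "nat \<Rightarrow> nat"
    and A :: "nat \<Rightarrow> nat \<Rightarrow> nat \<Rightarrow> 'a \<Rightarrow> real"
    and a :: real
  assumes prob: "\<And>m. prob_space (M m)"
    and meas: "\<And>m i k. i \<in> {1..n m} \<Longrightarrow> k \<in> {1..N m} \<Longrightarrow> A m i k \<in> borel_measurable (M m)"
    and col_indep: "\<And>m. prob_space.indep_vars (M m) (\<lambda>k. PiM {1..n m} (\<lambda>_. borel))
                       (\<lambda>k \<omega>. restrict (\<lambda>i. A m i k \<omega>) {1..n m}) {1..N m}"
    and entry_indep: "\<And>m k. k \<in> {1..N m} \<Longrightarrow>
                       prob_space.indep_vars (M m) (\<lambda>_. borel) (\<lambda>i. A m i k) {1..n m}"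
    and ident_distr: "\<And>m i k. i \<in> {1..n m} \<Longrightarrow> k \<in> {1..N m} \<Longrightarrow>
                       distr (M m) borel (A m i k) = distr (M m) borel (A m 1 k)"
    and svar_pos: "\<And>m k. k \<in> {1..N m} \<Longrightarrow> AE \<omega> in M m. col_svar (n m) (A m) k \<omega> > 0"
    and assm1: "\<exists>d>0. \<exists>C>0. \<exists>V0. open V0 \<and> (0::real) \<in> V0 \<and>
       (\<forall>m. \<forall>k\<in>{1..N m}. \<forall>t\<in>V0.
          (\<forall>i\<in>{1..n m}.
             integrable (M m) (\<lambda>\<omega>. exp (t * ((A m i k \<omega> - col_mu (M m) (A m) k)^2 - col_sig2 (M m) (A m) k))) \<and>
             (\<integral>\<omega>. exp (t * ((A m i k \<omega> - col_mu (M m) (A m) k)^2 - col_sig2 (M m) (A m) k)) \<partial>M m)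
               \<le> C * exp (d * t^2)) \<and>
          (\<forall>i\<in>{1..n m}.
             integrable (M m) (\<lambda>\<omega>. exp (t * (A m i k \<omega> - col_mu (M m) (A m) k))) \<and>
             (\<integral>\<omega>. exp (t * (A m i k \<omega> - col_mu (M m) (A m) k)) \<partial>M m) \<le> C * exp (d * t^2)) \<and>
          (\<forall>i\<in>{1..n m}. \<forall>j\<in>{1..n m}. i \<noteq> j \<longrightarrow>
             integrable (M m) (\<lambda>\<omega>. exp (t * ((A m i k \<omega> - col_mu (M m) (A m) k) * (A m j k \<omega> - col_mu (M m) (A m) k)))) \<and>
             (\<integral>\<omega>. exp (t * ((A m i k \<omega> - col_mu (M m) (A m) k) * (A m j k \<omega> - col_mu (M m) (A m) k))) \<partial>M m)
               \<le> C * exp (d * t^2)))"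
    and assm2: "\<exists>\<delta>min>0. \<exists>\<delta>max. \<forall>m. \<forall>k\<in>{1..N m}.
                  \<delta>min \<le> col_sig2 (M m) (A m) k \<and> col_sig2 (M m) (A m) k \<le> \<delta>max"
    and n_lim: "filterlim n at_top sequentially"
    and N_lim: "filterlim N at_top sequentially"
    and ratio: "(\<lambda>m. real (n m) / real (N m)) \<longlonglongrightarrow> a"
    and a_pos: "a > 0"
  shows "\<forall>\<epsilon>>0. (\<lambda>m. measure (M m) {\<omega> \<in> space (M m).
            \<bar>(\<Sum>i\<in>{1..n m}. \<Sum>j\<in>{1..n m} - {i}. (Gmat (n m) (N m) (A m) i j \<omega>)^2) / real (n m) - a\<bar> > \<epsilon>})
          \<longlonglongrightarrow> 0"
proof (intro allI impI)
  fix e :: real assume e: "e > 0"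
  obtain d C V0 where d: "d > 0" and C: "C > 0" and V0: "open V0" "(0::real) \<in> V0"
    and mgf: "\<forall>m. \<forall>k\<in>{1..N m}. \<forall>t\<in>V0.
          (\<forall>i\<in>{1..n m}.
             integrable (M m) (\<lambda>\<omega>. exp (t * ((A m i k \<omega> - col_mu (M m) (A m) k)^2 - col_sig2 (M m) (A m) k))) \<and>
             (\<integral>\<omega>. exp (t * ((A m i k \<omega> - col_mu (M m) (A m) k)^2 - col_sig2 (M m) (A m) k)) \<partial>M m)
               \<le> C * exp (d * t^2)) \<and>
          (\<forall>i\<in>{1..n m}.
             integrable (M m) (\<lambda>\<omega>. exp (t * (A m i k \<omega> - col_mu (M m) (A m) k))) \<and>
             (\<integral>\<omega>. exp (t * (A m i k \<omega> - col_mu (M m) (A m) k)) \<partial>M m) \<le> C * exp (d * t^2)) \<and>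
          (\<forall>i\<in>{1..n m}. \<forall>j\<in>{1..n m}. i \<noteq> j \<longrightarrow>
             integrable (M m) (\<lambda>\<omega>. exp (t * ((A m i k \<omega> - col_mu (M m) (A m) k) * (A m j k \<omega> - col_mu (M m) (A m) k)))) \<and>
             (\<integral>\<omega>. exp (t * ((A m i k \<omega> - col_mu (M m) (A m) k) * (A m j k \<omega> - col_mu (M m) (A m) k))) \<partial>M m)
               \<le> C * exp (d * t^2))"
    using assm1 by (elim exE conjE) (rule that, assumption+)
  obtain dmin dmax where dmin: "dmin > 0" and dd: "\<forall>m. \<forall>k\<in>{1..N m}. dmin \<le> col_sig2 (M m) (A m) k \<and> col_sig2 (M m) (A m) k \<le> dmax"
    using assm2 by (elim exE conjE) (rule that, assumption+)
  obtain r where r: "r > 0" "ball 0 r \<subseteq> V0" using V0 open_contains_ball by blast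
  define t0 where "t0 = r / 2"
  have t0: "t0 > 0" "t0 \<in> V0" using r unfolding t0_def by (auto simp: dist_real_def)
  define M4 where "M4 = (2 * exp (t0 * dmax) / t0^2) * (C * exp (d * t0^2))"
  define Cb where "Cb = 80 * M4 / dmin^2 + 4"
  have mom: "integrable (M m) (\<lambda>\<omega>. (A m i k \<omega> - col_mu (M m) (A m) k)^4)
      \<and> (\<integral>\<omega>. (A m i k \<omega> - col_mu (M m) (A m) k)^4 \<partial>M m) \<le> M4"
    if i: "i \<in> {1..n m}" and k: "k \<in> {1..N m}" for m i k
  proof -
    have I: "integrable (M m) (\<lambda>\<omega>. exp (t0 * ((A m i k \<omega> - col_mu (M m) (A m) k)^2 - col_sig2 (M m) (A m) k)))"
      and B: "(\<integral>\<omega>. exp (t0 * ((A m i k \<omega> - col_mu (M m) (A m) k)^2 - col_sig2 (M m) (A m) k)) \<partial>M m) \<le> C * exp (d * t0^2)"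
      using mgf i k t0(2) by blast+
    show ?thesis
      using mom_from_mgf[OF prob, of "\<lambda>\<omega>. A m i k \<omega> - col_mu (M m) (A m) k", OF _ t0(1) _ I B] meas[OF i k] dd k
      unfolding M4_def by auto
  qed
  have key: "measure (M m) {\<omega> \<in> space (M m).
            \<bar>(\<Sum>i\<in>{1..n m}. \<Sum>j\<in>{1..n m} - {i}. (Gmat (n m) (N m) (A m) i j \<omega>)^2) / real (n m) - a\<bar> > e}
        \<le> 3 * Cb / (e * real (N m)) + 216 * real (n m) / (e^2 * real (N m) ^ 2)"
    if n2: "n m \<ge> 2" and N1: "N m \<ge> 1" and cl: "\<bar>real (n m) / real (N m) - a\<bar> + 1 / (real (n m) - 1) \<le> e / 3" for m
  proof -
    interpret P: prob_space "M m" by (rule prob)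
    interpret colmodel2 "M m" "n m" "N m" "A m" M4 dmin
      apply unfold_locales
               apply (rule meas; assumption)
              apply (rule col_indep)
             apply (rule entry_indep; assumption)
            apply (rule ident_distr; assumption)
           apply (rule svar_pos; assumption)
          apply (rule n2)
         apply (rule dmin)
        apply (simp add: dd)
       apply (simp add: mom)
      apply (simp add: mom)
      done
    have "qq / real (n m) = 1 / (real (n m) - 1)" unfolding qq_def using n2 by (simp add: field_simps)
    then have cl': "\<bar>real (n m) / real (N m) - a\<bar> + qq / real (n m) \<le> e / 3" using cl by simp
    show ?thesis using per_m[OF N1 e cl'] unfolding Sf_def Cb_def .
  qed
  define b where "b m = (3 * Cb / e) * inverse (real (N m)) + (216 / e^2) * (real (n m) / real (N m)) * inverse (real (N m))" for m
  have NI: "filterlim (\<lambda>m. real (N m)) at_top sequentially"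
    by (rule filterlim_compose[OF filterlim_real_sequentially N_lim])
  have invN: "(\<lambda>m. inverse (real (N m))) \<longlonglongrightarrow> 0" by (rule tendsto_inverse_0_at_top[OF NI])
  have b0: "b \<longlonglongrightarrow> 0"
  proof -
    have "(\<lambda>m. (3 * Cb / e) * inverse (real (N m)) + (216 / e^2) * (real (n m) / real (N m)) * inverse (real (N m)))
       \<longlonglongrightarrow> (3 * Cb / e) * 0 + (216 / e^2) * a * 0"
      by (intro tendsto_intros invN ratio)
    then show ?thesis unfolding b_def[abs_def] by simp
  qed
  have ev_n: "eventually (\<lambda>m. real (n m) \<ge> 2 + 6 / e) sequentially"
    using filterlim_compose[OF filterlim_real_sequentially n_lim] unfolding filterlim_at_top by blast
  have ev_N: "eventually (\<lambda>m. N m \<ge> 1) sequentially"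
    using N_lim unfolding filterlim_at_top by blast
  have ev_r: "eventually (\<lambda>m. \<bar>real (n m) / real (N m) - a\<bar> < e / 6) sequentially"
  proof -
    have "eventually (\<lambda>m. dist (real (n m) / real (N m)) a < e / 6) sequentially"
      using tendstoD[OF ratio, of "e/6"] e by simp
    then show ?thesis by (simp add: dist_real_def)
  qed
  show "(\<lambda>m. measure (M m) {\<omega> \<in> space (M m).
            \<bar>(\<Sum>i\<in>{1..n m}. \<Sum>j\<in>{1..n m} - {i}. (Gmat (n m) (N m) (A m) i j \<omega>)^2) / real (n m) - a\<bar> > e})
          \<longlonglongrightarrow> 0"
  proof (rule tendsto_sandwich[OF _ _ tendsto_const b0])
    show "eventually (\<lambda>m. 0 \<le> measure (M m) {\<omega> \<in> space (M m).
            \<bar>(\<Sum>i\<in>{1..n m}. \<Sum>j\<in>{1..n m} - {i}. (Gmat (n m) (N m) (A m) i j \<omega>)^2) / real (n m) - a\<bar> > e}) sequentially"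
      by simp
    show "eventually (\<lambda>m. measure (M m) {\<omega> \<in> space (M m).
            \<bar>(\<Sum>i\<in>{1..n m}. \<Sum>j\<in>{1..n m} - {i}. (Gmat (n m) (N m) (A m) i j \<omega>)^2) / real (n m) - a\<bar> > e} \<le> b m) sequentially"
      using ev_n ev_N ev_r
    proof eventually_elim
      case (elim m)
      have "6 / e > 0" using e by simp
      then have "real (n m) \<ge> 2" using elim(1) by linarith
      then have n2: "n m \<ge> 2" by simp
      have n1: "real (n m) - 1 \<ge> 1 + 6 / e" using elim(1) by simp
      have pos: "real (n m) - 1 > 0" using n2 by simp
      have "e * (real (n m) - 1) \<ge> e * (1 + 6 / e)" using n1 e by (intro mult_left_mono) auto
      also have "e * (1 + 6 / e) = e + 6" using e by (simp add: field_simps)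
      finally have "6 \<le> e * (real (n m) - 1)" using e by simp
      then have "1 / (real (n m) - 1) \<le> e / 6" using pos e by (simp add: field_simps)
      then have "\<bar>real (n m) / real (N m) - a\<bar> + 1 / (real (n m) - 1) \<le> e / 3" using elim(3) by simp
      from key[OF n2 elim(2) this]
      show ?case unfolding b_def using elim(2) e by (simp add: field_simps power2_eq_square)
    qed
  qed
qed


end
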